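(* For all integers $n\ge0$: \begin{align*} pl_2(2n+1)&\equiv pl_2(2n)\pmod 2,\\ pl_3(3n+2)&\equiv 0\pmod 3,\\ pl_3(3n+1)&\equiv pl_3(3n)\pmod 3,\\ pl_5(5n+2)&\equiv pl_5(5n+4)\pmod 5,\\ pl_5(5n+1)&\equiv pl_5(5n+3)\pmod 5,\\ pl_7(7n+2)+pl_7(7n+3)&\equiv pl_7(7n+4)+pl_7(7n+5)\pmod 7. \end{align*}
   Context: For a positive integer $k$, $pl_k(n)$ denotes the number of $k$-component plane partitions of $n$ (plane partitions of $n$ all of whose entries are $\le k$), with $pl_k(0)=1$ and $pl_k(n)=0$ for $n<0$; equivalently $\sum_{n\ge0}pl_k(n)q^n=\prod_{n=1}^{\infty}(1-q^n)^{-\min(k,n)}$. *)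

theory Defs
  imports Main
begin

definition plane_partition :: "(nat \<times> nat \<Rightarrow> nat) \<Rightarrow> bool" where
  "plane_partition \<pi> \<longleftrightarrow>
     finite {p. \<pi> p \<noteq> 0} \<and>
     (\<forall>i j. \<pi> (i, Suc j) \<le> \<pi> (i, j)) \<and>
     (\<forall>i j. \<pi> (Suc i, j) \<le> \<pi> (i, j))"

definition pp_weight :: "(nat \<times> nat \<Rightarrow> nat) \<Rightarrow> nat" where
  "pp_weight \<pi> = (\<Sum>p\<in>{p. \<pi> p \<noteq> 0}. \<pi> p)"

text \<open>pl k n: number of k-component plane partitions of n, i.e. plane partitions of
  n all of whose entries are at most k. (pl k 0 = 1 via the empty partition.)\<close>

definition pl :: "nat \<Rightarrow> nat \<Rightarrow> nat" where
  "pl k n = card {\<pi>. plane_partition \<pi> \<and> pp_weight \<pi> = n \<and> (\<forall>p. \<pi> p \<le> k)}"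

end

theory Submission
  imports Defs "HOL-Computational_Algebra.Formal_Power_Series" "HOL-Computational_Algebra.Primes"
begin


definition interl :: "(nat \<Rightarrow> nat) \<Rightarrow> (nat \<Rightarrow> nat) \<Rightarrow> bool" where
  "interl a b \<longleftrightarrow> (\<forall>i. b (Suc i) \<le> a i \<and> a i \<le> b i)"

definition Lr :: "(nat \<Rightarrow> nat) \<Rightarrow> (nat \<Rightarrow> nat) \<Rightarrow> (nat \<Rightarrow> nat) \<Rightarrow> nat \<Rightarrow> nat \<Rightarrow> nat" where
  "Lr \<rho> \<mu> \<nu> m i = (case i of 0 \<Rightarrow> max (\<mu> 0) (\<nu> 0) + m
      | Suc j \<Rightarrow> max (\<mu> (Suc j)) (\<nu> (Suc j)) + min (\<mu> j) (\<nu> j) - \<rho> j)"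

definition Rho :: "(nat \<Rightarrow> nat) \<Rightarrow> (nat \<Rightarrow> nat) \<Rightarrow> (nat \<Rightarrow> nat) \<Rightarrow> nat \<Rightarrow> nat" where
  "Rho \<mu> \<nu> la i = min (\<mu> i) (\<nu> i) + max (\<mu> (Suc i)) (\<nu> (Suc i)) - la (Suc i)"

definition MM :: "(nat \<Rightarrow> nat) \<Rightarrow> (nat \<Rightarrow> nat) \<Rightarrow> (nat \<Rightarrow> nat) \<Rightarrow> nat" where
  "MM \<mu> \<nu> la = la 0 - max (\<mu> 0) (\<nu> 0)"

lemma L_0: "Lr \<rho> \<mu> \<nu> m 0 = max (\<mu> 0) (\<nu> 0) + m" by (simp add: Lr_def)
lemma L_Suc: "Lr \<rho> \<mu> \<nu> m (Suc j) = max (\<mu> (Suc j)) (\<nu> (Suc j)) + min (\<mu> j) (\<nu> j) - \<rho> j"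
  by (simp add: Lr_def)

lemma L1:
  assumes "interl \<rho> \<mu>" "interl \<rho> \<nu>"
  shows "interl \<mu> (Lr \<rho> \<mu> \<nu> m) \<and> interl \<nu> (Lr \<rho> \<mu> \<nu> m)"
proof -
  have a: "\<mu> (Suc i) \<le> \<rho> i" "\<rho> i \<le> \<mu> i" "\<nu> (Suc i) \<le> \<rho> i" "\<rho> i \<le> \<nu> i" for i
    using assms unfolding interl_def by auto
  show ?thesis unfolding interl_def
  proof (intro conjI allI)
    fix i
    show "Lr \<rho> \<mu> \<nu> m (Suc i) \<le> \<mu> i" "Lr \<rho> \<mu> \<nu> m (Suc i) \<le> \<nu> i"
      using a[of i] by (auto simp: L_Suc)
    show "\<mu> i \<le> Lr \<rho> \<mu> \<nu> m i" "\<nu> i \<le> Lr \<rho> \<mu> \<nu> m i"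
      using a[of i] a[of "i-1"] by (cases i; auto simp: L_0 L_Suc)+
  qed
qed

lemma L2:
  assumes "interl \<rho> \<mu>" "interl \<rho> \<nu>"
  shows "Rho \<mu> \<nu> (Lr \<rho> \<mu> \<nu> m) = \<rho>" "MM \<mu> \<nu> (Lr \<rho> \<mu> \<nu> m) = m"
proof -
  have a: "\<mu> (Suc i) \<le> \<rho> i" "\<rho> i \<le> \<mu> i" "\<nu> (Suc i) \<le> \<rho> i" "\<rho> i \<le> \<nu> i" for i
    using assms unfolding interl_def by auto
  show "Rho \<mu> \<nu> (Lr \<rho> \<mu> \<nu> m) = \<rho>"
  proof
    fix i show "Rho \<mu> \<nu> (Lr \<rho> \<mu> \<nu> m) i = \<rho> i"
      using a[of i] a[of "Suc i"] by (auto simp: Rho_def L_Suc)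
  qed
  show "MM \<mu> \<nu> (Lr \<rho> \<mu> \<nu> m) = m" by (simp add: MM_def L_0)
qed

lemma L3:
  assumes "interl \<mu> la" "interl \<nu> la"
  shows "interl (Rho \<mu> \<nu> la) \<mu> \<and> interl (Rho \<mu> \<nu> la) \<nu>"
proof -
  have a: "la (Suc i) \<le> \<mu> i" "\<mu> i \<le> la i" "la (Suc i) \<le> \<nu> i" "\<nu> i \<le> la i" for i
    using assms unfolding interl_def by auto
  show ?thesis unfolding interl_def
  proof (intro conjI allI)
    fix i
    show "\<mu> (Suc i) \<le> Rho \<mu> \<nu> la i" "\<nu> (Suc i) \<le> Rho \<mu> \<nu> la i"
      using a[of "Suc i"] a[of i] by (auto simp: Rho_def)
    show "Rho \<mu> \<nu> la i \<le> \<mu> i" "Rho \<mu> \<nu> la i \<le> \<nu> i"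
      using a[of "Suc i"] a[of i] by (auto simp: Rho_def)
  qed
qed

lemma L4:
  assumes "interl \<mu> la" "interl \<nu> la"
  shows "Lr (Rho \<mu> \<nu> la) \<mu> \<nu> (MM \<mu> \<nu> la) = la"
proof -
  have a: "la (Suc i) \<le> \<mu> i" "\<mu> i \<le> la i" "la (Suc i) \<le> \<nu> i" "\<nu> i \<le> la i" for i
    using assms unfolding interl_def by auto
  show ?thesis
  proof
    fix i show "Lr (Rho \<mu> \<nu> la) \<mu> \<nu> (MM \<mu> \<nu> la) i = la i"
      using a[of i] a[of "i-1"] by (cases i) (auto simp: L_0 L_Suc Rho_def MM_def)
  qed
qed

lemma L5a:
  assumes "interl \<rho> \<mu>" "interl \<rho> \<nu>"
  shows "(\<Sum>i<Suc B. Lr \<rho> \<mu> \<nu> m i) + (\<Sum>i<B. \<rho> i) =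
    (\<Sum>i<Suc B. max (\<mu> i) (\<nu> i)) + (\<Sum>i<B. min (\<mu> i) (\<nu> i)) + m"
proof (induction B)
  case 0 then show ?case by (simp add: L_0)
next
  case (Suc B)
  have "\<rho> B \<le> \<mu> B" "\<rho> B \<le> \<nu> B"
    using assms unfolding interl_def by auto
  then show ?case using Suc by (simp add: L_Suc)
qed

lemma L5:
  assumes "interl \<rho> \<mu>" "interl \<rho> \<nu>" "\<mu> B = 0" "\<nu> B = 0"
  shows "(\<Sum>i<Suc B. Lr \<rho> \<mu> \<nu> m i) + (\<Sum>i<B. \<rho> i) = (\<Sum>i<B. \<mu> i) + (\<Sum>i<B. \<nu> i) + m"
proof -
  have "(\<Sum>i<B. max (\<mu> i) (\<nu> i)) + (\<Sum>i<B. min (\<mu> i) (\<nu> i)) = (\<Sum>i<B. \<mu> i) + (\<Sum>i<B. \<nu> i)"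
  proof -
    have "\<And>x. max (\<mu> x) (\<nu> x) + min (\<mu> x) (\<nu> x) = \<mu> x + \<nu> x" by simp
    then show ?thesis by (simp add: sum.distrib[symmetric])
  qed
  then show ?thesis using L5a[OF assms(1,2), of m B] assms(3,4) by simp
qed


definition up :: "nat \<Rightarrow> (nat \<Rightarrow> nat \<Rightarrow> nat) \<Rightarrow> bool" where
  "up W s \<longleftrightarrow> s 0 = (\<lambda>_. 0) \<and> (\<forall>t<W. interl (s t) (s (Suc t)))"

primrec rowf :: "(nat \<Rightarrow> nat \<Rightarrow> nat) \<Rightarrow> (nat \<Rightarrow> nat) \<Rightarrow> nat \<Rightarrow> nat \<Rightarrow> nat" where
  "rowf \<tau> r 0 = (\<lambda>_. 0)"
| "rowf \<tau> r (Suc j) = Lr (\<tau> j) (\<tau> (Suc j)) (rowf \<tau> r j) (r j)"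

primrec bk :: "nat \<Rightarrow> (nat \<Rightarrow> nat \<Rightarrow> nat) \<Rightarrow> (nat \<Rightarrow> nat) \<Rightarrow> nat \<Rightarrow> nat \<Rightarrow> nat" where
  "bk W \<sigma> a 0 = a"
| "bk W \<sigma> a (Suc d) = Rho (bk W \<sigma> a d) (\<sigma> (W - Suc d)) (\<sigma> (W - d))"

lemma interl_supp: "interl a b \<Longrightarrow> a i = 0 \<Longrightarrow> b (Suc i) = 0"
  unfolding interl_def by (metis le_zero_eq)

lemma interl_le: "interl a b \<Longrightarrow> a i \<le> b i"
  unfolding interl_def by auto

lemma up_supp: "up W s \<Longrightarrow> t \<le> W \<Longrightarrow> t \<le> x \<Longrightarrow> s t x = 0"
proof (induction t arbitrary: x)
  case 0 then show ?case by (simp add: up_def)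
next
  case (Suc t)
  then obtain y where x: "x = Suc y" "t \<le> y" by (cases x) auto
  have "interl (s t) (s (Suc t))" using Suc.prems by (simp add: up_def)
  moreover have "s t y = 0" using Suc x by simp
  ultimately show ?case using interl_supp[of "s t" "s (Suc t)" y] x by simp
qed

lemma sum_ext0:
  fixes a b :: nat
  assumes "\<And>i. a \<le> i \<Longrightarrow> f i = 0" "a \<le> b"
  shows "(\<Sum>i<b. f i) = (\<Sum>i<a. (f i::nat))"
proof (rule sum.mono_neutral_right)
  show "finite {..<b}" by simp
  show "{..<a} \<subseteq> {..<b}" using assms(2) by auto
  show "\<forall>i\<in>{..<b} - {..<a}. f i = 0" using assms(1) by auto
qed

lemma RF:
  fixes r :: "nat \<Rightarrow> nat"
  assumes up: "up W \<tau>"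
  defines "\<sigma> \<equiv> rowf \<tau> r"
  shows "\<forall>j\<le>W. interl (\<tau> j) (\<sigma> j)" "up W \<sigma>"
    "\<forall>d\<le>W. bk W \<sigma> (\<tau> W) d = \<tau> (W - d)"
    "\<forall>j<W. MM (\<tau> (Suc j)) (\<sigma> j) (\<sigma> (Suc j)) = r j"
    "\<forall>j\<le>W. (\<Sum>x<W. \<sigma> j x) = (\<Sum>x<W. \<tau> j x) + (\<Sum>l<j. r l)"
proof -
  have t0: "\<tau> 0 = (\<lambda>_. 0)" and tc: "\<And>t. t < W \<Longrightarrow> interl (\<tau> t) (\<tau> (Suc t))"
    using up by (auto simp: up_def)
  show A: "\<forall>j\<le>W. interl (\<tau> j) (\<sigma> j)"
  proof (intro allI impI)
    fix j assume "j \<le> W" then show "interl (\<tau> j) (\<sigma> j)"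
    proof (induction j)
      case 0 then show ?case by (simp add: \<sigma>_def t0 interl_def)
    next
      case (Suc j)
      then show ?case using L1[OF tc, of j "\<sigma> j"] by (simp add: \<sigma>_def)
    qed
  qed
  have step: "\<sigma> (Suc j) = Lr (\<tau> j) (\<tau> (Suc j)) (\<sigma> j) (r j)" for j by (simp add: \<sigma>_def)
  have B: "\<And>j. j < W \<Longrightarrow> interl (\<sigma> j) (\<sigma> (Suc j))"
    using L1[OF tc] A step by simp
  show "up W \<sigma>" using B by (simp add: up_def \<sigma>_def)
  then have up2: "up W \<sigma>" .
  show "\<forall>d\<le>W. bk W \<sigma> (\<tau> W) d = \<tau> (W - d)"
  proof (intro allI impI)
    fix d assume "d \<le> W" then show "bk W \<sigma> (\<tau> W) d = \<tau> (W - d)"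
    proof (induction d)
      case 0 then show ?case by simp
    next
      case (Suc d)
      have e: "W - d = Suc (W - Suc d)" using Suc.prems by simp
      have "W - Suc d < W" using Suc.prems by simp
      then show ?case using Suc L2(1)[OF tc A[rule_format], of "W - Suc d"] e step
        by simp
    qed
  qed
  show "\<forall>j<W. MM (\<tau> (Suc j)) (\<sigma> j) (\<sigma> (Suc j)) = r j"
    using L2(2)[OF tc A[rule_format]] step by simp
  show "\<forall>j\<le>W. (\<Sum>x<W. \<sigma> j x) = (\<Sum>x<W. \<tau> j x) + (\<Sum>l<j. r l)"
  proof (intro allI impI)
    fix j assume "j \<le> W" then show "(\<Sum>x<W. \<sigma> j x) = (\<Sum>x<W. \<tau> j x) + (\<Sum>l<j. r l)"
    proof (induction j)
      case 0 then show ?case by (simp add: \<sigma>_def t0)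
    next
      case (Suc j)
      have jW: "j < W" using Suc by simp
      have z1: "\<tau> (Suc j) (Suc j) = 0" "\<sigma> j (Suc j) = 0"
        using up_supp[OF up, of "Suc j" "Suc j"] up_supp[OF up2, of j "Suc j"] jW by auto
      have L5': "(\<Sum>i<Suc (Suc j). \<sigma> (Suc j) i) + (\<Sum>i<Suc j. \<tau> j i) = (\<Sum>i<Suc j. \<tau> (Suc j) i) + (\<Sum>i<Suc j. \<sigma> j i) + r j"
      proof -
        have ij: "interl (\<tau> j) (\<sigma> j)" using A jW by simp
        show ?thesis using L5[OF tc[OF jW] ij z1, of "r j"] step by simp
      qed
      have e1: "(\<Sum>x<W. \<sigma> (Suc j) x) = (\<Sum>i<Suc (Suc j). \<sigma> (Suc j) i)"
      proof -
        have "(\<Sum>x<W. \<sigma> (Suc j) x) = (\<Sum>i<Suc j. \<sigma> (Suc j) i)"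
          by (rule sum_ext0) (use up_supp[OF up2, of "Suc j"] jW in auto)
        also have "\<dots> = (\<Sum>i<Suc (Suc j). \<sigma> (Suc j) i)"
          by (rule sum_ext0[symmetric]) (use up_supp[OF up2, of "Suc j"] jW in auto)
        finally show ?thesis .
      qed
      have e2: "(\<Sum>x<W. \<tau> (Suc j) x) = (\<Sum>i<Suc j. \<tau> (Suc j) i)"
        by (rule sum_ext0) (use up_supp[OF up, of "Suc j"] jW in auto)
      have e3: "(\<Sum>x<W. \<sigma> j x) = (\<Sum>i<Suc j. \<sigma> j i)"
      proof -
        have "(\<Sum>x<W. \<sigma> j x) = (\<Sum>i<j. \<sigma> j i)"
          by (rule sum_ext0) (use up_supp[OF up2, of j] jW in auto)
        also have "\<dots> = (\<Sum>i<Suc j. \<sigma> j i)"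
          by (rule sum_ext0[symmetric]) (use up_supp[OF up2, of j] jW in auto)
        finally show ?thesis .
      qed
      have e4: "(\<Sum>x<W. \<tau> j x) = (\<Sum>i<Suc j. \<tau> j i)"
      proof -
        have "(\<Sum>x<W. \<tau> j x) = (\<Sum>i<j. \<tau> j i)"
          by (rule sum_ext0) (use up_supp[OF up, of j] jW in auto)
        also have "\<dots> = (\<Sum>i<Suc j. \<tau> j i)"
          by (rule sum_ext0[symmetric]) (use up_supp[OF up, of j] jW in auto)
        finally show ?thesis .
      qed
      show ?case using Suc.IH jW L5' e1 e2 e3 e4 by simp
    qed
  qed
qed

lemma RB:
  assumes up: "up W \<sigma>" and a: "interl a (\<sigma> W)"
  defines "\<tau> \<equiv> (\<lambda>j. bk W \<sigma> a (W - j))"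
  defines "r \<equiv> (\<lambda>j. MM (\<tau> (Suc j)) (\<sigma> j) (\<sigma> (Suc j)))"
  shows "\<forall>j\<le>W. interl (\<tau> j) (\<sigma> j)" "up W \<tau>" "\<tau> W = a"
    "\<forall>j\<le>W. rowf \<tau> r j = \<sigma> j"
proof -
  have s0: "\<sigma> 0 = (\<lambda>_. 0)" and sc: "\<And>t. t < W \<Longrightarrow> interl (\<sigma> t) (\<sigma> (Suc t))"
    using up by (auto simp: up_def)
  have stepb: "\<tau> j = Rho (\<tau> (Suc j)) (\<sigma> j) (\<sigma> (Suc j))" if "j < W" for j
  proof -
    have e: "W - j = Suc (W - Suc j)" "W - Suc (W - Suc j) = j" "W - (W - Suc j) = Suc j"
      using that by auto
    show ?thesis unfolding \<tau>_def by (subst e(1)) (simp only: bk.simps e(2,3))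
  qed
  have A: "\<forall>d\<le>W. interl (\<tau> (W - d)) (\<sigma> (W - d))"
  proof (intro allI impI)
    fix d assume "d \<le> W" then show "interl (\<tau> (W - d)) (\<sigma> (W - d))"
    proof (induction d)
      case 0 then show ?case using a by (simp add: \<tau>_def)
    next
      case (Suc d)
      have e: "W - d = Suc (W - Suc d)" using Suc.prems by simp
      have "W - Suc d < W" using Suc.prems by simp
      then show ?case using Suc L3[OF _ sc, of "\<tau> (Suc (W - Suc d))" "W - Suc d"] e stepb[of "W - Suc d"]
        by simp
    qed
  qed
  show A': "\<forall>j\<le>W. interl (\<tau> j) (\<sigma> j)"
    using A by (metis diff_diff_cancel diff_le_self)
  have C: "\<And>j. j < W \<Longrightarrow> interl (\<tau> j) (\<tau> (Suc j))"
    using L3[OF _ sc] A' stepb by (metis Suc_leI)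
  have t0: "\<tau> 0 = (\<lambda>_. 0)"
    using A'[rule_format, of 0] s0 by (auto simp: interl_def fun_eq_iff)
  show "up W \<tau>" using C t0 by (simp add: up_def)
  show "\<tau> W = a" by (simp add: \<tau>_def)
  show "\<forall>j\<le>W. rowf \<tau> r j = \<sigma> j"
  proof (intro allI impI)
    fix j assume "j \<le> W" then show "rowf \<tau> r j = \<sigma> j"
    proof (induction j)
      case 0 then show ?case by (simp add: s0)
    next
      case (Suc j)
      then have jW: "j < W" by simp
      then have "Lr (\<tau> j) (\<tau> (Suc j)) (\<sigma> j) (r j) = \<sigma> (Suc j)"
      proof -
        have ij: "interl (\<tau> (Suc j)) (\<sigma> (Suc j))" using A' jW by simp
        show ?thesis using L4[OF ij sc[OF jW]] stepb[OF jW] by (simp add: r_def)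
      qed
      then show ?case using Suc by simp
    qed
  qed
qed

lemma rowf_cong: "(\<And>t. t \<le> W \<Longrightarrow> \<tau> t = \<tau>' t) \<Longrightarrow> (\<And>l. l < W \<Longrightarrow> r l = r' l) \<Longrightarrow> j \<le> W
   \<Longrightarrow> rowf \<tau> r j = rowf \<tau>' r' j"
  by (induction j) auto

lemma bk_cong: "(\<And>t. t \<le> W \<Longrightarrow> \<sigma> t = \<sigma>' t) \<Longrightarrow> bk W \<sigma> a d = bk W \<sigma>' a d"
  by (induction d) auto


definition Seq :: "nat \<Rightarrow> nat \<Rightarrow> (nat \<Rightarrow> nat \<Rightarrow> nat) set" where
  "Seq W k = {s. up W s \<and> (\<forall>t. W \<le> t \<longrightarrow> t < W + k \<longrightarrow> interl (s (Suc t)) (s t))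
      \<and> (\<forall>t. W + k \<le> t \<longrightarrow> s t = (\<lambda>_. 0))}"

definition Mat :: "nat \<Rightarrow> nat \<Rightarrow> (nat \<times> nat \<Rightarrow> nat) set" where
  "Mat W k = {m. \<forall>i j. (k \<le> i \<or> W \<le> j) \<longrightarrow> m (i, j) = 0}"

definition wts :: "nat \<Rightarrow> nat \<Rightarrow> (nat \<Rightarrow> nat \<Rightarrow> nat) \<Rightarrow> nat" where
  "wts W k s = (\<Sum>t\<le>W + k. \<Sum>x<W. s t x)"

definition wtm :: "nat \<Rightarrow> nat \<Rightarrow> (nat \<times> nat \<Rightarrow> nat) \<Rightarrow> nat" where
  "wtm W k m = (\<Sum>i<k. \<Sum>j<W. m (i, j) * (W - j + (k - 1 - i)))"

definition tot :: "nat \<Rightarrow> nat \<Rightarrow> (nat \<times> nat \<Rightarrow> nat) \<Rightarrow> nat" where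
  "tot W k m = (\<Sum>i<k. \<Sum>j<W. m (i, j))"

primrec Phi :: "nat \<Rightarrow> nat \<Rightarrow> (nat \<times> nat \<Rightarrow> nat) \<Rightarrow> nat \<Rightarrow> nat \<Rightarrow> nat" where
  "Phi W 0 m = (\<lambda>_ _. 0)"
| "Phi W (Suc k) m = (let s = Phi W k m; \<sigma> = rowf s (\<lambda>j. m (k, j))
      in (\<lambda>t. if t \<le> W then \<sigma> t else s (t - 1)))"

primrec Psi :: "nat \<Rightarrow> nat \<Rightarrow> (nat \<Rightarrow> nat \<Rightarrow> nat) \<Rightarrow> nat \<times> nat \<Rightarrow> nat" where
  "Psi W 0 s = (\<lambda>_. 0)"
| "Psi W (Suc k) s' = (let \<tau> = (\<lambda>j. bk W s' (s' (Suc W)) (W - j));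
      s = (\<lambda>t. if t \<le> W then \<tau> t else s' (Suc t))
    in (\<lambda>(i, j). if i < k then Psi W k s (i, j)
         else if i = k \<and> j < W then MM (\<tau> (Suc j)) (s' j) (s' (Suc j)) else 0))"

lemma Phi_cong: "(\<And>i j. i < k \<Longrightarrow> m (i, j) = m' (i, j)) \<Longrightarrow> Phi W k m = Phi W k m'"
  by (induction k) (auto simp: Let_def)

lemma sum_tri: "(\<Sum>t\<le>N. \<Sum>l<t. r l) = (\<Sum>l<N. r l * (N - l :: nat))"
proof (induction N)
  case 0 then show ?case by simp
next
  case (Suc N)
  have "(\<Sum>l<Suc N. r l * (Suc N - l)) = (\<Sum>l<Suc N. r l * (N - l) + r l)"
    by (rule sum.cong) (auto simp: Suc_diff_le)
  also have "\<dots> = (\<Sum>l<N. r l * (N - l)) + (\<Sum>l<Suc N. r l)"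
    by (simp add: sum.distrib)
  finally show ?case using Suc by simp
qed

lemma up_mono: "up W s \<Longrightarrow> t \<le> t' \<Longrightarrow> t' \<le> W \<Longrightarrow> s t x \<le> s t' x"
proof (induction t')
  case 0 then show ?case by simp
next
  case (Suc t')
  show ?case
  proof (cases "t = Suc t'")
    case True then show ?thesis by simp
  next
    case False
    then have "s t x \<le> s t' x" using Suc by simp
    also have "s t' x \<le> s (Suc t') x" using Suc.prems interl_le[of "s t'" "s (Suc t')" x]
      by (simp add: up_def)
    finally show ?thesis .
  qed
qed

lemma I1:
  "m \<in> Mat W k \<Longrightarrow> Phi W k m \<in> Seq W k \<and> Psi W k (Phi W k m) = m \<and>
     wts W k (Phi W k m) = wtm W k m \<and> (\<Sum>x<W. Phi W k m W x) = tot W k m"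
proof (induction k arbitrary: m)
  case 0
  then have "m = (\<lambda>_. 0)" by (auto simp: Mat_def fun_eq_iff)
  then show ?case by (simp add: Seq_def up_def interl_def wts_def wtm_def tot_def)
next
  case (Suc k)
  define m' where "m' = (\<lambda>(i, j). if i < k then m (i, j) else 0)"
  have m': "m' \<in> Mat W k" using Suc.prems by (auto simp: Mat_def m'_def)
  define s where "s = Phi W k m"
  have ss: "s = Phi W k m'" unfolding s_def by (rule Phi_cong) (simp add: m'_def)
  note IH = Suc.IH[OF m', folded ss]
  have sS: "s \<in> Seq W k" using IH by simp
  then have ups: "up W s" and dn: "\<And>t. W \<le> t \<Longrightarrow> t < W + k \<Longrightarrow> interl (s (Suc t)) (s t)"
     and zs: "\<And>t. W + k \<le> t \<Longrightarrow> s t = (\<lambda>_. 0)"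
    by (auto simp: Seq_def)
  define r where "r = (\<lambda>j. m (k, j))"
  define \<sigma> where "\<sigma> = rowf s r"
  note Rf = RF[OF ups, of r, folded \<sigma>_def]
  define s' where "s' = (\<lambda>t. if t \<le> W then \<sigma> t else s (t - 1))"
  have Ph: "Phi W (Suc k) m = s'"
    unfolding s'_def \<sigma>_def r_def s_def by (simp add: Let_def)
  have s'S: "s' \<in> Seq W (Suc k)"
  proof -
    have "up W s'" using Rf(2) by (auto simp: up_def s'_def)
    moreover have "interl (s' (Suc t)) (s' t)" if "W \<le> t" "t < W + Suc k" for t
    proof (cases "t = W")
      case True then show ?thesis using Rf(1) by (simp add: s'_def)
    next
      case False
      then have "W \<le> t - 1" "t - 1 < W + k" "Suc (t - 1) = t" using that by auto
      then show ?thesis using dn[of "t - 1"] False that by (simp add: s'_def)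
    qed
    moreover have "s' t = (\<lambda>_. 0)" if "W + Suc k \<le> t" for t
      using zs[of "t - 1"] that by (simp add: s'_def)
    ultimately show ?thesis by (simp add: Seq_def)
  qed
  have Ps: "Psi W (Suc k) s' = m"
  proof -
    define \<tau> where "\<tau> = (\<lambda>j. bk W s' (s' (Suc W)) (W - j))"
    have a: "s' (Suc W) = s W" by (simp add: s'_def)
    have \<tau>: "\<tau> j = s j" if "j \<le> W" for j
    proof -
      have "\<tau> j = bk W \<sigma> (s W) (W - j)"
        unfolding \<tau>_def a by (rule bk_cong) (simp add: s'_def)
      also have "\<dots> = s j" using Rf(3) that by simp
      finally show ?thesis .
    qed
    have inner: "(\<lambda>t. if t \<le> W then \<tau> t else s' (Suc t)) = s"
      by (auto simp: fun_eq_iff \<tau> s'_def)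
    have "Psi W (Suc k) s' = (\<lambda>(i, j). if i < k then Psi W k s (i, j)
         else if i = k \<and> j < W then MM (\<tau> (Suc j)) (s' j) (s' (Suc j)) else 0)"
      by (simp only: Psi.simps Let_def \<tau>_def[symmetric] inner)
    also have "\<dots> = m"
    proof (rule ext, clarify)
      fix i j
      show "(if i < k then Psi W k s (i, j) else if i = k \<and> j < W then MM (\<tau> (Suc j)) (s' j) (s' (Suc j)) else 0) = m (i, j)"
      proof (cases "i < k")
        case True then show ?thesis using IH by (simp add: m'_def)
      next
        case False
        show ?thesis
        proof (cases "i = k \<and> j < W")
          case True
          then have "MM (\<tau> (Suc j)) (s' j) (s' (Suc j)) = r j"
            using Rf(4) \<tau>[of "Suc j"] by (simp add: s'_def)
          then show ?thesis using True by (simp add: r_def)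
        next
          case False2: False
          then have "m (i, j) = 0" using Suc.prems \<open>\<not> i < k\<close> by (auto simp: Mat_def)
          then show ?thesis using False False2 by auto
        qed
      qed
    qed
    finally show ?thesis .
  qed
  have tot': "(\<Sum>x<W. s' W x) = tot W (Suc k) m"
  proof -
    have "(\<Sum>x<W. s' W x) = (\<Sum>x<W. s W x) + (\<Sum>l<W. r l)" using Rf(5) by (simp add: s'_def)
    also have "\<dots> = tot W k m' + (\<Sum>l<W. r l)" using IH by simp
    also have "\<dots> = tot W (Suc k) m"
      by (simp add: tot_def m'_def r_def)
    finally show ?thesis .
  qed
  have wt': "wts W (Suc k) s' = wtm W (Suc k) m"
  proof -
    have "wts W (Suc k) s' = (\<Sum>t\<le>W. \<Sum>x<W. s' t x) + (\<Sum>t\<in>{W<..W + Suc k}. \<Sum>x<W. s' t x)"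
    proof -
      have e: "{..W + Suc k} = {..W} \<union> {W<..W + Suc k}" by auto
      show ?thesis unfolding wts_def e by (rule sum.union_disjoint) auto
    qed
    also have "(\<Sum>t\<le>W. \<Sum>x<W. s' t x) = (\<Sum>t\<le>W. (\<Sum>x<W. s t x) + (\<Sum>l<t. r l))"
      using Rf(5) by (auto simp: s'_def intro!: sum.cong)
    also have "\<dots> = (\<Sum>t\<le>W. \<Sum>x<W. s t x) + (\<Sum>l<W. r l * (W - l))"
      by (simp add: sum.distrib sum_tri)
    also have "(\<Sum>t\<in>{W<..W + Suc k}. \<Sum>x<W. s' t x) = (\<Sum>t\<in>{W..W + k}. \<Sum>x<W. s t x)"
    proof -
      have "(\<Sum>t\<in>{W..W + k}. \<Sum>x<W. s t x) = (\<Sum>t\<in>Suc ` {W..W + k}. \<Sum>x<W. s' t x)"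
        by (subst sum.reindex) (auto simp: s'_def)
      also have "Suc ` {W..W + k} = {W<..W + Suc k}"
        by (auto simp: image_iff) (metis Suc_pred atLeastAtMost_iff gr0I le_add1 not_less_eq_eq)?
      finally show ?thesis by simp
    qed
    also have "(\<Sum>t\<in>{W..W + k}. \<Sum>x<W. s t x) = (\<Sum>x<W. s W x) + (\<Sum>t\<in>{W<..W + k}. \<Sum>x<W. s t x)"
      by (subst sum.head) auto
    moreover have "(\<Sum>t\<le>W. \<Sum>x<W. s t x) + (\<Sum>t\<in>{W<..W + k}. \<Sum>x<W. s t x) = wts W k s"
    proof -
      have e: "{..W + k} = {..W} \<union> {W<..W + k}" by auto
      show ?thesis unfolding wts_def e by (rule sum.union_disjoint[symmetric]) auto
    qed
    ultimately have "wts W (Suc k) s' = wts W k s + (\<Sum>x<W. s W x) + (\<Sum>l<W. r l * (W - l))"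
      by simp
    also have "\<dots> = wtm W k m' + tot W k m' + (\<Sum>l<W. r l * (W - l))" using IH by simp
    also have "\<dots> = wtm W (Suc k) m"
    proof -
      have h: "\<And>i j c. i < k \<Longrightarrow> j < W \<Longrightarrow> c * (W + k - Suc (j + i)) + c = c * (W + k - (j + i))"
        by (subgoal_tac "W + k - (j + i) = Suc (W + k - Suc (j + i))") auto
      have "wtm W k m' + tot W k m' = (\<Sum>i<k. \<Sum>j<W. m (i, j) * (W - j + (k - i)))"
        unfolding wtm_def tot_def sum.distrib[symmetric]
        by (rule sum.cong[OF refl], rule sum.cong[OF refl]) (auto simp: m'_def h)
      then show ?thesis by (simp add: wtm_def r_def)
    qed
    finally show ?thesis .
  qed
  show ?case using s'S Ps tot' wt' Ph by simp
qed

lemma I2: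
  "s \<in> Seq W k \<Longrightarrow> Psi W k s \<in> Mat W k \<and> Phi W k (Psi W k s) = s"
proof (induction k arbitrary: s)
  case 0
  then have ups: "up W s" and z: "\<And>t. W \<le> t \<Longrightarrow> s t = (\<lambda>_. 0)" by (auto simp: Seq_def)
  have "s t x = 0" for t x
  proof (cases "t \<le> W")
    case True
    then have "s t x \<le> s W x" using up_mono[OF ups True] by simp
    then show ?thesis using z[of W] by simp
  next
    case False then show ?thesis using z[of t] by simp
  qed
  then show ?case by (auto simp: Mat_def fun_eq_iff)
next
  case (Suc k)
  let ?s' = s
  have ups: "up W s" and dn: "\<And>t. W \<le> t \<Longrightarrow> t < W + Suc k \<Longrightarrow> interl (s (Suc t)) (s t)"
     and zs: "\<And>t. W + Suc k \<le> t \<Longrightarrow> s t = (\<lambda>_. 0)"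
    using Suc.prems by (auto simp: Seq_def)
  define a where "a = s (Suc W)"
  have ia: "interl a (s W)" using dn[of W] by (simp add: a_def)
  define \<tau> where "\<tau> = (\<lambda>j. bk W s a (W - j))"
  define r where "r = (\<lambda>j. MM (\<tau> (Suc j)) (s j) (s (Suc j)))"
  note Rf = RB[OF ups ia, folded \<tau>_def, folded r_def]
  have R4: "\<forall>j\<le>W. rowf \<tau> r j = s j" using RB(4)[OF ups ia] unfolding \<tau>_def r_def .
  define s0 where "s0 = (\<lambda>t. if t \<le> W then \<tau> t else s (Suc t))"
  have s0S: "s0 \<in> Seq W k"
  proof -
    have "up W s0" using Rf(2) by (auto simp: up_def s0_def)
    moreover have "interl (s0 (Suc t)) (s0 t)" if "W \<le> t" "t < W + k" for t
    proof (cases "t = W")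
      case True
      have "\<tau> W = s (Suc W)" by (simp add: \<tau>_def a_def)
      then show ?thesis using dn[of "Suc W"] that True by (simp add: s0_def)
    next
      case False
      then show ?thesis using dn[of "Suc t"] that by (simp add: s0_def)
    qed
    moreover have "s0 t = (\<lambda>_. 0)" if "W + k \<le> t" for t
    proof (cases "t \<le> W")
      case True
      then have "t = W" "k = 0" using that by auto
      have "\<tau> W = s (Suc W)" by (simp add: \<tau>_def a_def)
      then show ?thesis using \<open>t = W\<close> \<open>k = 0\<close> zs[of "Suc W"] by (simp add: s0_def)
    next
      case False then show ?thesis using zs[of "Suc t"] that by (simp add: s0_def)
    qed
    ultimately show ?thesis by (simp add: Seq_def)
  qed
  note IH = Suc.IH[OF s0S]
  define m where "m = Psi W (Suc k) s"
  have m_eq: "m = (\<lambda>(i, j). if i < k then Psi W k s0 (i, j)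
         else if i = k \<and> j < W then r j else 0)"
    unfolding m_def by (simp only: Psi.simps Let_def a_def[symmetric] \<tau>_def[symmetric] s0_def[symmetric] r_def)
  have mM: "m \<in> Mat W (Suc k)"
    using IH by (auto simp: m_eq Mat_def)
  have "Phi W (Suc k) m = s"
  proof -
    have p1: "Phi W k m = s0"
      using IH Phi_cong[of k m "Psi W k s0" W] by (auto simp: m_eq)
    have "Phi W (Suc k) m = (\<lambda>t. if t \<le> W then rowf s0 (\<lambda>j. m (k, j)) t else s0 (t - 1))"
      by (simp add: p1 Let_def)
    also have "\<dots> = s"
    proof
      fix t
      show "(if t \<le> W then rowf s0 (\<lambda>j. m (k, j)) t else s0 (t - 1)) = s t"
      proof (cases "t \<le> W")
        case True
        have "rowf s0 (\<lambda>j. m (k, j)) t = rowf \<tau> r t"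
          by (rule rowf_cong) (use True in \<open>auto simp: s0_def m_eq\<close>)
        then show ?thesis using True R4 by simp
      next
        case False
        show ?thesis
        proof (cases "t = Suc W")
          case True
          have "\<tau> W = s (Suc W)" by (simp add: \<tau>_def a_def)
          then show ?thesis using True by (simp add: s0_def)
        next
          case False2: False
          then have "\<not> t - 1 \<le> W" "Suc (t - 1) = t" using False by auto
          then show ?thesis using False by (simp add: s0_def)
        qed
      qed
    qed
    finally show ?thesis .
  qed
  then show ?case using mM by (simp add: m_def)
qed

theorem Mat_Seq_card: "card {m \<in> Mat W k. wtm W k m = n} = card {s \<in> Seq W k. wts W k s = n}"
proof (rule bij_betw_same_card[of "Phi W k"], rule bij_betw_byWitness[of _ "Psi W k"])
  show "\<forall>m\<in>{m \<in> Mat W k. wtm W k m = n}. Psi W k (Phi W k m) = m" using I1 by auto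
  show "\<forall>s\<in>{s \<in> Seq W k. wts W k s = n}. Phi W k (Psi W k s) = s" using I2 by auto
  show "Phi W k ` {m \<in> Mat W k. wtm W k m = n} \<subseteq> {s \<in> Seq W k. wts W k s = n}" using I1 by auto
  show "Psi W k ` {s \<in> Seq W k. wts W k s = n} \<subseteq> {m \<in> Mat W k. wtm W k m = n}"
  proof clarify
    fix s assume "s \<in> Seq W k" "n = wts W k s"
    have "Psi W k s \<in> Mat W k" "Phi W k (Psi W k s) = s" using I2[of s] \<open>s \<in> Seq W k\<close> by auto
    moreover have "wts W k (Phi W k (Psi W k s)) = wtm W k (Psi W k s)"
      using I1[of "Psi W k s" W k] calculation(1) by blast
    ultimately show "Psi W k s \<in> Mat W k \<and> wtm W k (Psi W k s) = wts W k s"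
      by simp
  qed
qed


definition Arr :: "nat \<Rightarrow> nat \<Rightarrow> (nat \<Rightarrow> nat \<Rightarrow> nat) set" where
  "Arr W k = {A. (\<forall>x y. A (Suc x) y \<le> A x y) \<and> (\<forall>x y. A x (Suc y) \<le> A x y) \<and>
     (\<forall>x y. (W \<le> x \<or> k \<le> y) \<longrightarrow> A x y = 0)}"

definition wA :: "nat \<Rightarrow> nat \<Rightarrow> (nat \<Rightarrow> nat \<Rightarrow> nat) \<Rightarrow> nat" where
  "wA W k A = (\<Sum>x<W. \<Sum>y<k. A x y)"

definition Dg :: "nat \<Rightarrow> (nat \<Rightarrow> nat \<Rightarrow> nat) \<Rightarrow> nat \<Rightarrow> nat \<Rightarrow> nat" where
  "Dg W A = (\<lambda>t x. if t \<le> W then A (x + (W - t)) x else A x (x + (t - W)))"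

definition Eg :: "nat \<Rightarrow> nat \<Rightarrow> (nat \<Rightarrow> nat \<Rightarrow> nat) \<Rightarrow> nat \<Rightarrow> nat \<Rightarrow> nat" where
  "Eg W k s = (\<lambda>x y. if x < W \<and> y < k then (if y \<le> x then s (W - (x - y)) y else s (W + (y - x)) x) else 0)"

lemma U2:
  assumes "s \<in> Seq W k" "W \<le> t" "W + k \<le> x + t"
  shows "s t x = 0"
  using assms(2,3)
proof (induction "W + k - t" arbitrary: t x)
  case 0
  then have "W + k \<le> t" by simp
  then show ?case using assms(1) by (simp add: Seq_def)
next
  case (Suc d)
  then have tk: "t < W + k" by simp
  then obtain i where x: "x = Suc i" using Suc.prems by (cases x) auto
  have "interl (s (Suc t)) (s t)" using assms(1) Suc.prems tk by (simp add: Seq_def)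
  then have "s t (Suc i) \<le> s (Suc t) i" by (simp add: interl_def)
  moreover have "s (Suc t) i = 0" using Suc.hyps(1)[of "Suc t" i] Suc.hyps(2) Suc.prems x by simp
  ultimately show ?case using x by simp
qed

lemma U4:
  assumes "s \<in> Seq W k" "W \<le> t"
  shows "s t x \<le> s W x"
  using assms(2)
proof (induction t)
  case 0 then show ?case by simp
next
  case (Suc t)
  show ?case
  proof (cases "W = Suc t")
    case True then show ?thesis by simp
  next
    case False
    then have Wt: "W \<le> t" using Suc.prems by simp
    have "s (Suc t) x \<le> s t x"
    proof (cases "t < W + k")
      case True
      then have "interl (s (Suc t)) (s t)" using assms(1) Wt by (simp add: Seq_def)
      then show ?thesis by (simp add: interl_def)
    next
      case False
      then show ?thesis using assms(1) by (simp add: Seq_def)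
    qed
    then show ?thesis using Suc.IH[OF Wt] by simp
  qed
qed

lemma Seq_up: "s \<in> Seq W k \<Longrightarrow> up W s" by (simp add: Seq_def)

lemma Seq_zero:
  assumes "s \<in> Seq W k" and that: "(t \<le> W \<and> (t \<le> x \<or> k \<le> x)) \<or> (W \<le> t \<and> (W \<le> x \<or> W + k \<le> x + t))"
  shows "s t x = 0"
proof -
  have sW1: "s W x = 0" if "W \<le> x" for x using up_supp[OF Seq_up[OF assms(1)], of W x] that by simp
  have sW2: "s W x = 0" if "k \<le> x" for x using U2[OF assms(1), of W x] that by simp
  show ?thesis
  proof (cases "t \<le> W")
    case True
    then show ?thesis using that up_supp[OF Seq_up[OF assms(1)] True] up_mono[OF Seq_up[OF assms(1)] True order_refl, of x] sW2[of x]
      by auto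
  next
    case False
    then show ?thesis using that U2[OF assms(1), of t x] U4[OF assms(1), of t x] sW1[of x] by auto
  qed
qed

lemma D_Seq:
  assumes "A \<in> Arr W k"
  shows "Dg W A \<in> Seq W k"
proof -
  have m1: "A (Suc x) y \<le> A x y" and m2: "A x (Suc y) \<le> A x y"
    and z: "W \<le> x \<or> k \<le> y \<Longrightarrow> A x y = 0" for x y
    using assms by (auto simp: Arr_def)
  have "up W (Dg W A)"
    unfolding up_def
  proof (intro conjI allI impI)
    show "Dg W A 0 = (\<lambda>_. 0)" using z by (auto simp: Dg_def fun_eq_iff)
    fix t assume t: "t < W"
    define e where "e = W - Suc t"
    have e: "W - t = Suc e" "W - Suc t = e" using t by (auto simp: e_def)
    show "interl (Dg W A t) (Dg W A (Suc t))"
      unfolding interl_def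
    proof
      fix i
      have "A (Suc (i + e)) (Suc i) \<le> A (Suc (i + e)) i" by (rule m2)
      moreover have "A (Suc (i + e)) i \<le> A (i + e) i" by (rule m1)
      ultimately show "Dg W A (Suc t) (Suc i) \<le> Dg W A t i \<and> Dg W A t i \<le> Dg W A (Suc t) i"
        using t by (simp add: Dg_def e)
    qed
  qed
  moreover have "interl (Dg W A (Suc t)) (Dg W A t)" if "W \<le> t" "t < W + k" for t
    unfolding interl_def
  proof
    fix i
    define d where "d = t - W"
    have dt: "Dg W A t = (\<lambda>x. A x (x + d))" using that by (auto simp: Dg_def d_def fun_eq_iff)
    have dt': "Dg W A (Suc t) = (\<lambda>x. A x (Suc (x + d)))" using that by (auto simp: Dg_def d_def fun_eq_iff Suc_diff_le)
    have "A (Suc i) (Suc (i + d)) \<le> A i (Suc (i + d))" by (rule m1)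
    moreover have "A i (Suc (i + d)) \<le> A i (i + d)" by (rule m2)
    ultimately show "Dg W A t (Suc i) \<le> Dg W A (Suc t) i \<and> Dg W A (Suc t) i \<le> Dg W A t i"
      by (simp add: dt dt')
  qed
  moreover have "Dg W A t = (\<lambda>_. 0)" if "W + k \<le> t" for t
  proof
    fix x
    show "Dg W A t x = 0"
    proof (cases "t \<le> W")
      case True then show ?thesis using that z[of "x + (W - t)" x] by (simp add: Dg_def)
    next
      case False
      have "k \<le> x + (t - W)" using that by arith
      then show ?thesis using False z[of x "x + (t - W)"] by (simp add: Dg_def)
    qed
  qed
  ultimately show ?thesis by (simp add: Seq_def)
qed

lemma E_Arr:
  assumes "s \<in> Seq W k"
  shows "Eg W k s \<in> Arr W k"
proof -
  have upc: "t < W \<Longrightarrow> interl (s t) (s (Suc t))" for t using assms by (simp add: Seq_def up_def)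
  have dnc: "W \<le> t \<Longrightarrow> t < W + k \<Longrightarrow> interl (s (Suc t)) (s t)" for t using assms by (simp add: Seq_def)
  have "Eg W k s (Suc x) y \<le> Eg W k s x y" for x y
  proof (cases "Suc x < W \<and> y < k")
    case False then show ?thesis by (auto simp: Eg_def)
  next
    case True
    show ?thesis
    proof (cases "y \<le> x")
      case True2: True
      define t where "t = W - (Suc x - y)"
      have tt: "t < W" "W - (x - y) = Suc t" using True True2 by (auto simp: t_def)
      have "s t y \<le> s (Suc t) y" using upc[OF tt(1)] by (simp add: interl_def)
      then show ?thesis using True True2 tt by (simp add: Eg_def t_def[symmetric])
    next
      case False2: False
      show ?thesis
      proof (cases "y = Suc x")
        case True3: True
        have "interl (s (Suc W)) (s W)" using dnc[of W] True True3 by simp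
        then have "s W (Suc x) \<le> s (Suc W) x" by (simp add: interl_def)
        then show ?thesis using True True3 by (simp add: Eg_def)
      next
        case False3: False
        define t where "t = W + (y - Suc x)"
        have tt: "W \<le> t" "t < W + k" "W + (y - x) = Suc t" using True False2 False3 by (auto simp: t_def)
        have "s t (Suc x) \<le> s (Suc t) x" using dnc[OF tt(1,2)] by (simp add: interl_def)
        then show ?thesis using True False2 False3 tt by (simp add: Eg_def t_def[symmetric])
      qed
    qed
  qed
  moreover have "Eg W k s x (Suc y) \<le> Eg W k s x y" for x y
  proof (cases "x < W \<and> Suc y < k")
    case False then show ?thesis by (auto simp: Eg_def)
  next
    case True
    show ?thesis
    proof (cases "Suc y \<le> x")
      case True2: True
      define t where "t = W - (x - y)"
      have tt: "t < W" "W - (x - Suc y) = Suc t" using True True2 by (auto simp: t_def)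
      have "s (Suc t) (Suc y) \<le> s t y" using upc[OF tt(1)] by (simp add: interl_def)
      then show ?thesis using True True2 tt by (simp add: Eg_def t_def[symmetric])
    next
      case False2: False
      show ?thesis
      proof (cases "y = x")
        case True3: True
        have "interl (s (Suc W)) (s W)" using dnc[of W] True True3 by simp
        then have "s (Suc W) x \<le> s W x" by (simp add: interl_def)
        then show ?thesis using True True3 by (simp add: Eg_def)
      next
        case False3: False
        define t where "t = W + (y - x)"
        have tt: "W \<le> t" "t < W + k" "W + (Suc y - x) = Suc t" using True False2 False3 by (auto simp: t_def)
        have "s (Suc t) x \<le> s t x" using dnc[OF tt(1,2)] by (simp add: interl_def)
        then show ?thesis using True False2 False3 tt by (simp add: Eg_def t_def[symmetric])
      qed
    qed
  qed
  ultimately show ?thesis by (auto simp: Arr_def Eg_def)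
qed

lemma ED: "A \<in> Arr W k \<Longrightarrow> Eg W k (Dg W A) = A"
  by (auto simp: Arr_def Eg_def Dg_def fun_eq_iff)

lemma DE:
  assumes "s \<in> Seq W k"
  shows "Dg W (Eg W k s) = s"
proof (intro ext)
  fix t x
  note Z = Seq_zero[OF assms]
  show "Dg W (Eg W k s) t x = s t x"
  proof (cases "t \<le> W")
    case True
    show ?thesis
    proof (cases "x < t \<and> x < k")
      case True2: True
      then have "x + (W - t) < W" "W - (x + (W - t) - x) = t" "x \<le> x + (W - t)" using True by auto
      then show ?thesis using True True2 unfolding Dg_def Eg_def by (simp del: diff_add_inverse)
    next
      case False2: False
      then have "s t x = 0" using Z[of t x] True by auto
      moreover have "\<not> (x + (W - t) < W \<and> x < k)" using False2 True by auto
      ultimately show ?thesis using True by (simp add: Dg_def Eg_def)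
    qed
  next
    case False
    show ?thesis
    proof (cases "x < W \<and> x + (t - W) < k")
      case True2: True
      then have "\<not> x + (t - W) \<le> x" "W + (x + (t - W) - x) = t" using False by auto
      then show ?thesis using False True2 unfolding Dg_def Eg_def by (simp del: diff_add_inverse)
    next
      case False2: False
      then have "W \<le> x \<or> W + k \<le> x + t" using False by arith
      then have "s t x = 0" using Z[of t x] False by auto
      then show ?thesis using False False2 unfolding Dg_def Eg_def by auto
    qed
  qed
qed

definition gd :: "nat \<Rightarrow> nat \<times> nat \<Rightarrow> nat \<times> nat" where
  "gd W = (\<lambda>(x, y). if y \<le> x then (W - (x - y), y) else (W + (y - x), x))"

lemma wts_D:
  assumes "A \<in> Arr W k"
  shows "wts W k (Dg W A) = wA W k A"
proof -
  have z: "W \<le> x \<or> k \<le> y \<Longrightarrow> A x y = 0" for x y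
    using assms by (auto simp: Arr_def)
  let ?T = "{..W + k} \<times> {..<W}" and ?P = "{..<W} \<times> {..<k}"
  let ?f = "\<lambda>(t, x). Dg W A t x"
  have inj: "inj_on (gd W) ?P"
    by (auto simp: inj_on_def gd_def split: if_splits)
  have sub: "gd W ` ?P \<subseteq> ?T" by (auto simp: gd_def split: if_splits)
  have fg: "?f (gd W p) = (\<lambda>(x, y). A x y) p" if "p \<in> ?P" for p
    using that by (auto simp: gd_def Dg_def split: prod.splits)
  have zero: "?f q = 0" if "q \<in> ?T - gd W ` ?P" for q
  proof -
    obtain t x where q: "q = (t, x)" by force
    show ?thesis
    proof (rule ccontr)
      assume nz: "?f q \<noteq> 0"
      show False
      proof (cases "t \<le> W")
        case True
        then have "A (x + (W - t)) x \<noteq> 0" using nz q by (simp add: Dg_def)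
        then have c: "x + (W - t) < W" "x < k" using z by (meson not_le)+
        then have "gd W (x + (W - t), x) = (t, x)" using True by (auto simp: gd_def)
        then have "q \<in> gd W ` ?P" using c q by force
        then show False using that by simp
      next
        case False
        then have "A x (x + (t - W)) \<noteq> 0" using nz q by (simp add: Dg_def)
        then have c: "x < W" "x + (t - W) < k" using z by (meson not_le)+
        then have "gd W (x, x + (t - W)) = (t, x)" using False by (auto simp: gd_def)
        then have "q \<in> gd W ` ?P" using c q by force
        then show False using that by simp
      qed
    qed
  qed
  have "wts W k (Dg W A) = (\<Sum>q\<in>?T. ?f q)"
    unfolding wts_def by (simp add: sum.cartesian_product)
  also have "\<dots> = (\<Sum>q\<in>gd W ` ?P. ?f q)"
    by (rule sum.mono_neutral_right) (use sub zero in auto)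
  also have "\<dots> = (\<Sum>p\<in>?P. ?f (gd W p))"
    using sum.reindex[OF inj, of ?f] by (simp add: comp_def)
  also have "\<dots> = (\<Sum>p\<in>?P. (\<lambda>(x, y). A x y) p)"
    by (rule sum.cong) (use fg in auto)
  also have "\<dots> = wA W k A"
    unfolding wA_def by (simp add: sum.cartesian_product)
  finally show ?thesis .
qed

theorem Arr_Seq_card: "card {A \<in> Arr W k. wA W k A = n} = card {s \<in> Seq W k. wts W k s = n}"
proof (rule bij_betw_same_card[of "Dg W"], rule bij_betw_byWitness[of _ "Eg W k"])
  show "\<forall>A\<in>{A \<in> Arr W k. wA W k A = n}. Eg W k (Dg W A) = A" using ED by auto
  show "\<forall>s\<in>{s \<in> Seq W k. wts W k s = n}. Dg W (Eg W k s) = s" using DE by auto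
  show "Dg W ` {A \<in> Arr W k. wA W k A = n} \<subseteq> {s \<in> Seq W k. wts W k s = n}"
    using D_Seq wts_D by auto
  show "Eg W k ` {s \<in> Seq W k. wts W k s = n} \<subseteq> {A \<in> Arr W k. wA W k A = n}"
  proof clarify
    fix s assume s: "s \<in> Seq W k" "n = wts W k s"
    have "Eg W k s \<in> Arr W k" using E_Arr[OF s(1)] .
    moreover have "wA W k (Eg W k s) = wts W k s"
      using wts_D[OF calculation] DE[OF s(1)] by simp
    ultimately show "Eg W k s \<in> Arr W k \<and> wA W k (Eg W k s) = wts W k s" by simp
  qed
qed


definition cj :: "(nat \<Rightarrow> nat) \<Rightarrow> nat \<Rightarrow> nat" where
  "cj f y = card {c. y < f c}"

lemma lt_supp: fixes B c :: nat assumes "\<And>c. B \<le> c \<Longrightarrow> f c = (0::nat)" "y < f c" shows "c < B"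
proof (rule ccontr)
  assume "\<not> c < B" then have "f c = 0" using assms(1) by simp
  then show False using assms(2) by simp
qed

lemma downset_eq:
  fixes Sf :: "nat set"
  assumes "finite Sf" "\<And>c c'. c \<in> Sf \<Longrightarrow> c' \<le> c \<Longrightarrow> c' \<in> Sf"
  shows "Sf = {..<card Sf}"
proof -
  obtain N where N: "N \<notin> Sf" using assms(1) infinite_UNIV_nat ex_new_if_finite by blast
  define M where "M = (LEAST n. n \<notin> Sf)"
  have M: "M \<notin> Sf" using N unfolding M_def by (rule LeastI)
  have "Sf = {..<M}"
  proof
    show "Sf \<subseteq> {..<M}"
    proof
      fix c assume "c \<in> Sf"
      then show "c \<in> {..<M}" using M assms(2)[of c M] by (cases "M \<le> c") auto
    qed
    show "{..<M} \<subseteq> Sf"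
    proof
      fix c assume "c \<in> {..<M}"
      then show "c \<in> Sf" using not_less_Least[of c "\<lambda>n. n \<notin> Sf"] by (auto simp: M_def)
    qed
  qed
  then show ?thesis by simp
qed

lemma cj_iff:
  assumes mono: "\<And>c. f (Suc c) \<le> f c" and fin: "\<And>c. B \<le> c \<Longrightarrow> f c = 0"
  shows "c < cj f y \<longleftrightarrow> y < f c"
proof -
  let ?Sf = "{c. y < f c}"
  have "?Sf \<subseteq> {..<B}" using lt_supp[of B f, OF fin] by auto
  then have f: "finite ?Sf" by (rule finite_subset) simp
  have "?Sf = {..<card ?Sf}"
  proof (rule downset_eq[OF f])
    fix c c' assume "c \<in> ?Sf" "c' \<le> c"
    then show "c' \<in> ?Sf" using lift_Suc_antimono_le[of f, OF mono, of c' c] by simp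
  qed
  then show ?thesis unfolding cj_def by (metis lessThan_iff mem_Collect_eq)
qed

lemma cj_cj:
  assumes mono: "\<And>c. f (Suc c) \<le> f c" and fin: "\<And>c. B \<le> c \<Longrightarrow> f c = 0"
  shows "cj (cj f) c = f c"
proof -
  have "{y. c < cj f y} = {..<f c}" using cj_iff[of f B, OF mono fin] by auto
  then show ?thesis by (simp add: cj_def)
qed

lemma cj_sum:
  assumes fin: "\<And>c. B \<le> c \<Longrightarrow> f c = 0" and bd: "\<And>c. f c \<le> K"
  shows "(\<Sum>y<K. cj f y) = (\<Sum>c<B. f c)"
proof -
  have "cj f y = (\<Sum>c<B. if y < f c then 1 else 0)" for y
  proof -
    have "{c. y < f c} = {c \<in> {..<B}. y < f c}" using lt_supp[of B f, OF fin] by auto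
    then have "cj f y = card {c \<in> {..<B}. y < f c}" by (simp add: cj_def)
    also have "\<dots> = (\<Sum>c\<in>{c \<in> {..<B}. y < f c}. 1)" by simp
    also have "\<dots> = (\<Sum>c<B. if y < f c then 1 else 0)" by (rule sum.inter_filter) simp
    finally show ?thesis .
  qed
  then have "(\<Sum>y<K. cj f y) = (\<Sum>y<K. \<Sum>c<B. if y < f c then 1 else 0)" by simp
  also have "\<dots> = (\<Sum>c<B. \<Sum>y<K. if y < f c then 1 else 0)" by (rule sum.swap)
  also have "\<dots> = (\<Sum>c<B. f c)"
  proof (rule sum.cong[OF refl])
    fix c
    have "(\<Sum>y<K. if y < f c then 1 else 0) = (\<Sum>y\<in>{y \<in> {..<K}. y < f c}. 1::nat)"
      by (rule sum.inter_filter[symmetric]) simp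
    also have "{y \<in> {..<K}. y < f c} = {..<f c}" using bd[of c] by auto
    finally show "(\<Sum>y<K. if y < f c then 1 else 0) = f c" by simp
  qed
  finally show ?thesis .
qed

lemma finite_pairs_bound:
  assumes "finite (Sf :: (nat \<times> nat) set)"
  obtains B where "\<And>x c. (x, c) \<in> Sf \<Longrightarrow> x < B \<and> c < B"
proof -
  have "finite (fst ` Sf \<union> snd ` Sf)" using assms by simp
  then obtain B where B: "\<forall>x\<in>fst ` Sf \<union> snd ` Sf. x < B" unfolding finite_nat_set_iff_bounded by blast
  show ?thesis
  proof (rule that)
    fix x c assume "(x, c) \<in> Sf"
    then have "x \<in> fst ` Sf" "c \<in> snd ` Sf" by force+
    then show "x < B \<and> c < B" using B by blast
  qed
qed

definition toA :: "(nat \<times> nat \<Rightarrow> nat) \<Rightarrow> nat \<Rightarrow> nat \<Rightarrow> nat" where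
  "toA \<pi> x = cj (\<lambda>c. \<pi> (x, c))"

definition toP :: "(nat \<Rightarrow> nat \<Rightarrow> nat) \<Rightarrow> nat \<times> nat \<Rightarrow> nat" where
  "toP A = (\<lambda>(x, c). cj (A x) c)"

definition PP :: "nat \<Rightarrow> nat \<Rightarrow> (nat \<times> nat \<Rightarrow> nat) set" where
  "PP k n = {\<pi>. plane_partition \<pi> \<and> pp_weight \<pi> = n \<and> (\<forall>p. \<pi> p \<le> k)}"

lemma PP_props:
  assumes "\<pi> \<in> PP k n"
  shows "toA \<pi> \<in> Arr n k \<and> wA n k (toA \<pi>) = n \<and> toP (toA \<pi>) = \<pi>"
proof -
  have fin: "finite {p. \<pi> p \<noteq> 0}" and m1: "\<And>i j. \<pi> (i, Suc j) \<le> \<pi> (i, j)"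
    and m2: "\<And>i j. \<pi> (Suc i, j) \<le> \<pi> (i, j)" and w: "pp_weight \<pi> = n" and bk: "\<And>p. \<pi> p \<le> k"
    using assms by (auto simp: PP_def plane_partition_def)
  obtain B where B: "\<And>x c. \<pi> (x, c) \<noteq> 0 \<Longrightarrow> x < B \<and> c < B"
    using finite_pairs_bound[OF fin] by auto
  have rowz: "\<And>c. B \<le> c \<Longrightarrow> \<pi> (x, c) = 0" for x using B by (meson not_le)
  have a1: "\<pi> (x, c) \<le> \<pi> (x', c')" if "x' \<le> x" "c' \<le> c" for x x' c c'
  proof -
    have "\<pi> (x, c) \<le> \<pi> (x, c')" using lift_Suc_antimono_le[of "\<lambda>j. \<pi> (x, j)", OF m1 that(2)] .
    also have "\<dots> \<le> \<pi> (x', c')" using lift_Suc_antimono_le[of "\<lambda>i. \<pi> (i, c')", OF m2 that(1)] .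
    finally show ?thesis .
  qed
  have bigrow: "\<pi> (x, c) = 0" if "n \<le> x" for x c
  proof (rule ccontr)
    assume nz: "\<pi> (x, c) \<noteq> 0"
    have pos: "1 \<le> \<pi> (x', 0)" if "x' \<le> x" for x'
      using a1[of x' x 0 c] that nz by simp
    have "(\<Sum>x'\<le>x. (1::nat)) \<le> (\<Sum>x'\<le>x. \<pi> (x', 0))"
      by (rule sum_mono) (use pos in auto)
    also have "\<dots> = (\<Sum>p\<in>(\<lambda>x'. (x', 0)) ` {..x}. \<pi> p)"
      by (subst sum.reindex) (auto simp: inj_on_def)
    also have "\<dots> \<le> pp_weight \<pi>"
      unfolding pp_weight_def
    proof (rule sum_mono2[OF fin])
      show "(\<lambda>x'. (x', 0)) ` {..x} \<subseteq> {p. \<pi> p \<noteq> 0}" using pos by fastforce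
    qed auto
    finally show False using w that by simp
  qed
  have arr: "toA \<pi> \<in> Arr n k"
  proof -
    have f: "finite {c. y < \<pi> (x, c)}" for x y
      by (rule finite_subset[of _ "{..<B}"]) (use lt_supp[of B "\<lambda>c. \<pi> (x, c)", OF rowz] in auto)
    have "toA \<pi> (Suc x) y \<le> toA \<pi> x y" for x y
      unfolding toA_def cj_def by (rule card_mono[OF f]) (use m2 order.strict_trans2 in blast)
    moreover have "toA \<pi> x (Suc y) \<le> toA \<pi> x y" for x y
      unfolding toA_def cj_def by (rule card_mono[OF f]) auto
    moreover have "toA \<pi> x y = 0" if "n \<le> x \<or> k \<le> y" for x y
    proof -
      have "{c. y < \<pi> (x, c)} = {}"
      proof (cases "n \<le> x")
        case True then show ?thesis using bigrow by simp
      next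
        case False then have "k \<le> y" using that by simp
        then show ?thesis using bk[of "(x, c)" for c] by (auto simp: not_less) (meson le_trans not_le)
      qed
      then show ?thesis by (simp add: toA_def cj_def)
    qed
    ultimately show ?thesis by (auto simp: Arr_def)
  qed
  have wt: "wA n k (toA \<pi>) = n"
  proof -
    have "wA n k (toA \<pi>) = (\<Sum>x<n. \<Sum>c<B. \<pi> (x, c))"
      unfolding wA_def toA_def by (rule sum.cong[OF refl], rule cj_sum) (use rowz bk in auto)
    also have "\<dots> = (\<Sum>p\<in>{..<n} \<times> {..<B}. \<pi> p)" by (simp add: sum.cartesian_product)
    also have "\<dots> = pp_weight \<pi>"
      unfolding pp_weight_def
    proof (rule sum.mono_neutral_right)
      show "{p. \<pi> p \<noteq> 0} \<subseteq> {..<n} \<times> {..<B}"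
      proof
        fix p assume p: "p \<in> {p. \<pi> p \<noteq> 0}"
        obtain x c where pc: "p = (x, c)" by force
        have "\<not> n \<le> x" using bigrow[of x c] p pc by auto
        then show "p \<in> {..<n} \<times> {..<B}" using pc B[of x c] p by auto
      qed
    qed auto
    finally show ?thesis using w by simp
  qed
  have "toP (toA \<pi>) = \<pi>"
  proof (rule ext, clarify)
    fix x c
    show "toP (toA \<pi>) (x, c) = \<pi> (x, c)"
      using cj_cj[of "\<lambda>j. \<pi> (x, j)" B, OF m1 rowz] by (simp add: toP_def toA_def)
  qed
  then show ?thesis using arr wt by simp
qed

lemma Arr_props:
  assumes "A \<in> Arr n k" "wA n k A = n"
  shows "toP A \<in> PP k n \<and> toA (toP A) = A"
proof -
  have m1: "\<And>x y. A (Suc x) y \<le> A x y" and m2: "\<And>x y. A x (Suc y) \<le> A x y"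
    and z: "\<And>x y. n \<le> x \<or> k \<le> y \<Longrightarrow> A x y = 0"
    using assms(1) by (auto simp: Arr_def)
  have zk: "\<And>y. k \<le> y \<Longrightarrow> A x y = 0" for x using z by auto
  have bd: "A x y \<le> n" for x y
  proof (cases "x < n \<and> y < k")
    case True
    have "A x y \<le> (\<Sum>y<k. A x y)" by (rule member_le_sum) (use True in auto)
    also have "\<dots> \<le> (\<Sum>x<n. \<Sum>y<k. A x y)" by (rule member_le_sum[of x "{..<n}" "\<lambda>x. \<Sum>y<k. A x y"]) (use True in auto)
    finally show ?thesis using assms(2) by (simp add: wA_def)
  next
    case False then show ?thesis using z by (simp add: not_less)
  qed
  have f: "finite {y. c < A x y}" for x c
    by (rule finite_subset[of _ "{..<k}"]) (use lt_supp[of k "A x", OF zk] in auto)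
  have supp: "toP A (x, c) = 0" if "n \<le> x \<or> n \<le> c" for x c
  proof -
    have "{y. c < A x y} = {}"
    proof (cases "n \<le> x")
      case True then show ?thesis using z by simp
    next
      case False then have "n \<le> c" using that by simp
      then show ?thesis using bd[of x] by (auto simp: not_less) (meson le_trans not_le)
    qed
    then show ?thesis by (simp add: toP_def cj_def)
  qed
  have pp: "plane_partition (toP A)"
    unfolding plane_partition_def
  proof (intro conjI allI)
    show "finite {p. toP A p \<noteq> 0}"
    proof (rule finite_subset[of _ "{..<n} \<times> {..<n}"])
      show "{p. toP A p \<noteq> 0} \<subseteq> {..<n} \<times> {..<n}"
      proof
        fix p assume p: "p \<in> {p. toP A p \<noteq> 0}"
        obtain x c where pc: "p = (x, c)" by force
        have "\<not> (n \<le> x \<or> n \<le> c)" using supp[of x c] p pc by auto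
        then show "p \<in> {..<n} \<times> {..<n}" using pc by auto
      qed
    qed simp
    show "toP A (i, Suc j) \<le> toP A (i, j)" for i j
      unfolding toP_def cj_def by simp (rule card_mono[OF f], auto)
    show "toP A (Suc i, j) \<le> toP A (i, j)" for i j
      unfolding toP_def cj_def by simp (rule card_mono[OF f], use m1 order.strict_trans2 in blast)
  qed
  have lek: "toP A p \<le> k" for p
  proof -
    obtain x c where p: "p = (x, c)" by force
    have "card {y. c < A x y} \<le> card {..<k}"
      by (rule card_mono) (use lt_supp[of k "A x", OF zk] in auto)
    then show ?thesis by (simp add: p toP_def cj_def)
  qed
  have wt: "pp_weight (toP A) = n"
  proof -
    have "pp_weight (toP A) = (\<Sum>p\<in>{..<n} \<times> {..<n}. toP A p)"
      unfolding pp_weight_def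
    proof (rule sum.mono_neutral_left)
      show "{p. toP A p \<noteq> 0} \<subseteq> {..<n} \<times> {..<n}"
      proof
        fix p assume p: "p \<in> {p. toP A p \<noteq> 0}"
        obtain x c where pc: "p = (x, c)" by force
        have "\<not> (n \<le> x \<or> n \<le> c)" using supp[of x c] p pc by auto
        then show "p \<in> {..<n} \<times> {..<n}" using pc by auto
      qed
    qed auto
    also have "\<dots> = (\<Sum>x<n. \<Sum>c<n. cj (A x) c)" by (simp add: sum.cartesian_product toP_def)
    also have "\<dots> = (\<Sum>x<n. \<Sum>y<k. A x y)"
      by (rule sum.cong[OF refl], rule cj_sum) (use zk bd in auto)
    finally show ?thesis using assms(2) by (simp add: wA_def)
  qed
  have "toA (toP A) = A"
  proof (rule ext, rule ext)
    fix x y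
    have "toA (toP A) x y = cj (cj (A x)) y" by (simp add: toP_def toA_def)
    then show "toA (toP A) x y = A x y"
      using cj_cj[of "A x" k, OF m2 zk] by simp
  qed
  then show ?thesis using pp lek wt by (simp add: PP_def)
qed

theorem pl_Arr: "pl k n = card {A \<in> Arr n k. wA n k A = n}"
proof -
  have "pl k n = card (PP k n)" by (simp add: pl_def PP_def)
  also have "\<dots> = card {A \<in> Arr n k. wA n k A = n}"
  proof (rule bij_betw_same_card[of toA], rule bij_betw_byWitness[of _ toP])
    show "\<forall>a\<in>PP k n. toP (toA a) = a" using PP_props by auto
    show "\<forall>a\<in>{A \<in> Arr n k. wA n k A = n}. toA (toP a) = a" using Arr_props by auto
    show "toA ` PP k n \<subseteq> {A \<in> Arr n k. wA n k A = n}" using PP_props by auto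
    show "toP ` {A \<in> Arr n k. wA n k A = n} \<subseteq> PP k n" using Arr_props by auto
  qed
  finally show ?thesis .
qed

theorem pl_Mat: "pl k n = card {m \<in> Mat n k. wtm n k m = n}"
  using pl_Arr Arr_Seq_card Mat_Seq_card by simp


definition geom :: "nat \<Rightarrow> int fps" where
  "geom h = Abs_fps (\<lambda>i. if h dvd i then 1 else 0)"

definition FS :: "'c set \<Rightarrow> ('c \<Rightarrow> nat) \<Rightarrow> nat \<Rightarrow> ('c \<Rightarrow> nat) set" where
  "FS C w n = {m. (\<forall>c. c \<notin> C \<longrightarrow> m c = 0) \<and> (\<Sum>c\<in>C. m c * w c) = n}"

lemma geom_mult_nth:
  assumes "0 < h"
  shows "fps_nth (geom h * P) n = (\<Sum>v\<in>{v. v * h \<le> n}. fps_nth P (n - v * h))"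
proof -
  have "fps_nth (geom h * P) n = (\<Sum>i=0..n. (if h dvd i then 1 else 0) * fps_nth P (n - i))"
    by (simp add: fps_mult_nth geom_def)
  also have "\<dots> = (\<Sum>i=0..n. if h dvd i then fps_nth P (n - i) else 0)"
    by (rule sum.cong) auto
  also have "\<dots> = (\<Sum>i\<in>{i \<in> {0..n}. h dvd i}. fps_nth P (n - i))"
    by (rule sum.inter_filter[symmetric]) simp
  also have "{i \<in> {0..n}. h dvd i} = (\<lambda>v. v * h) ` {v. v * h \<le> n}"
    by (auto simp: image_iff dvd_def mult.commute)
  also have "(\<Sum>i\<in>(\<lambda>v. v * h) ` {v. v * h \<le> n}. fps_nth P (n - i)) = (\<Sum>v\<in>{v. v * h \<le> n}. fps_nth P (n - v * h))"
    by (subst sum.reindex) (use assms in \<open>auto simp: inj_on_def\<close>)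
  finally show ?thesis .
qed

lemma FS_count:
  assumes "finite C" "\<And>c. c \<in> C \<Longrightarrow> 0 < w c"
  shows "finite (FS C w n) \<and> int (card (FS C w n)) = fps_nth (\<Prod>c\<in>C. geom (w c)) n"
  using assms
proof (induction C arbitrary: n rule: finite_induct)
  case empty
  have "FS {} w n = (if n = 0 then {\<lambda>_. 0} else {})" by (auto simp: FS_def)
  then show ?case by simp
next
  case (insert a C)
  have wa: "0 < w a" using insert.prems by simp
  note IH = insert.IH[OF insert.prems]
  let ?V = "{v. v * w a \<le> n}"
  have finV: "finite ?V"
  proof (rule finite_subset[of _ "{..n}"])
    show "?V \<subseteq> {..n}"
    proof
      fix v assume "v \<in> ?V"
      moreover have "v * 1 \<le> v * w a" using wa by (intro mult_le_mono2) simp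
      ultimately show "v \<in> {..n}" by (simp only: mult_1_right mem_Collect_eq atMost_iff)
    qed
  qed simp
  have eq: "FS (insert a C) w n = (\<Union>v\<in>?V. (\<lambda>m. m(a := v)) ` FS C w (n - v * w a))"
  proof
    show "FS (insert a C) w n \<subseteq> (\<Union>v\<in>?V. (\<lambda>m. m(a := v)) ` FS C w (n - v * w a))"
    proof
      fix m assume m: "m \<in> FS (insert a C) w n"
      then have s: "m a * w a + (\<Sum>c\<in>C. m c * w c) = n" and sup: "\<forall>c. c \<notin> insert a C \<longrightarrow> m c = 0"
        using insert.hyps by (auto simp: FS_def)
      have "(\<Sum>c\<in>C. (m(a := 0)) c * w c) = (\<Sum>c\<in>C. m c * w c)"
        by (rule sum.cong) (use insert.hyps in auto)
      then have "m(a := 0) \<in> FS C w (n - m a * w a)" using s sup by (auto simp: FS_def)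
      moreover have "m a \<in> ?V" using s by auto
      ultimately show "m \<in> (\<Union>v\<in>?V. (\<lambda>m. m(a := v)) ` FS C w (n - v * w a))"
        by (auto intro!: bexI[of _ "m a"] image_eqI[of _ _ "m(a := 0)"])
    qed
    show "(\<Union>v\<in>?V. (\<lambda>m. m(a := v)) ` FS C w (n - v * w a)) \<subseteq> FS (insert a C) w n"
    proof clarify
      fix v m assume v: "v * w a \<le> n" and m: "m \<in> FS C w (n - v * w a)"
      have "(\<Sum>c\<in>C. (m(a := v)) c * w c) = (\<Sum>c\<in>C. m c * w c)"
        by (rule sum.cong) (use insert.hyps in auto)
      then show "m(a := v) \<in> FS (insert a C) w n" using m v insert.hyps by (auto simp: FS_def)
    qed
  qed
  have inj: "inj_on (\<lambda>m. m(a := v)) (FS C w n')" for v n'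
  proof (rule inj_onI)
    fix x y assume "x \<in> FS C w n'" "y \<in> FS C w n'" "x(a := v) = y(a := v)"
    then show "x = y" using insert.hyps by (auto simp: FS_def fun_eq_iff) (metis fun_upd_apply)
  qed
  have disj: "\<forall>v\<in>?V. \<forall>v'\<in>?V. v \<noteq> v' \<longrightarrow> (\<lambda>m. m(a := v)) ` FS C w (n - v * w a) \<inter> (\<lambda>m. m(a := v')) ` FS C w (n - v' * w a) = {}"
    by auto (metis fun_upd_same)
  have fins: "\<forall>v\<in>?V. finite ((\<lambda>m. m(a := v)) ` FS C w (n - v * w a))" using IH by auto
  have "finite (FS (insert a C) w n)" unfolding eq using finV fins by auto
  moreover have "int (card (FS (insert a C) w n)) = (\<Sum>v\<in>?V. int (card (FS C w (n - v * w a))))"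
    unfolding eq by (simp add: card_UN_disjoint[OF finV fins disj] card_image[OF inj])
  moreover have "fps_nth (\<Prod>c\<in>insert a C. geom (w c)) n = (\<Sum>v\<in>?V. fps_nth (\<Prod>c\<in>C. geom (w c)) (n - v * w a))"
    using insert.hyps by (simp add: geom_mult_nth[OF wa])
  ultimately show ?case using IH by simp
qed

theorem pl_geom: "int (pl k n) = fps_nth (\<Prod>p\<in>{..<k} \<times> {..<n}. geom (n - snd p + (k - 1 - fst p))) n"
proof -
  let ?w = "\<lambda>p. n - snd p + (k - 1 - fst p)"
  have "{m \<in> Mat n k. wtm n k m = n} = FS ({..<k} \<times> {..<n}) ?w n"
  proof -
    have "wtm n k m = (\<Sum>p\<in>{..<k} \<times> {..<n}. m p * ?w p)" for m
      unfolding wtm_def by (simp add: sum.cartesian_product) (rule sum.cong, auto)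
    moreover have "m \<in> Mat n k \<longleftrightarrow> (\<forall>c. c \<notin> {..<k} \<times> {..<n} \<longrightarrow> m c = 0)" for m
      by (auto simp: Mat_def not_less)
    ultimately show ?thesis by (auto simp: FS_def)
  qed
  then show ?thesis using pl_Mat[of k n] FS_count[of "{..<k} \<times> {..<n}" ?w n] by auto
qed


definition cg :: "nat \<Rightarrow> nat \<Rightarrow> int fps \<Rightarrow> int fps \<Rightarrow> bool" where
  "cg p N f g \<longleftrightarrow> (\<forall>i\<le>N. int p dvd fps_nth f i - fps_nth g i)"

lemma cg_refl: "cg p N f f" by (simp add: cg_def)
lemma cg_sym: "cg p N f g \<Longrightarrow> cg p N g f"
  unfolding cg_def by (metis dvd_minus_iff minus_diff_eq)
lemma cg_trans: "cg p N f g \<Longrightarrow> cg p N g h \<Longrightarrow> cg p N f h"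
  unfolding cg_def by (metis diff_add_cancel add_diff_eq dvd_add)

lemma cg_mult:
  assumes "cg p N f f'" "cg p N g g'"
  shows "cg p N (f * g) (f' * g')"
  unfolding cg_def
proof (intro allI impI)
  fix i assume i: "i \<le> N"
  have "fps_nth (f * g) i - fps_nth (f' * g') i =
    (\<Sum>j=0..i. (fps_nth f j - fps_nth f' j) * fps_nth g (i - j) + fps_nth f' j * (fps_nth g (i - j) - fps_nth g' (i - j)))"
    by (simp add: fps_mult_nth sum_subtractf[symmetric] algebra_simps)
  also have "int p dvd \<dots>"
  proof (rule dvd_sum)
    fix j assume j: "j \<in> {0..i}"
    have "int p dvd fps_nth f j - fps_nth f' j" using assms(1) i j by (auto simp: cg_def)
    moreover have "int p dvd fps_nth g (i - j) - fps_nth g' (i - j)" using assms(2) i j by (auto simp: cg_def)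
    ultimately show "int p dvd (fps_nth f j - fps_nth f' j) * fps_nth g (i - j) + fps_nth f' j * (fps_nth g (i - j) - fps_nth g' (i - j))"
      by (simp add: dvd_add)
  qed
  finally show "int p dvd fps_nth (f * g) i - fps_nth (f' * g') i" .
qed

lemma cg_prod:
  assumes "finite I" "\<And>i. i \<in> I \<Longrightarrow> cg p N (f i) (g i)"
  shows "cg p N (\<Prod>i\<in>I. f i) (\<Prod>i\<in>I. g i)"
  using assms by (induction I rule: finite_induct) (auto simp: cg_refl cg_mult)

lemma cg_dvd: "(of_nat p :: int fps) dvd f - g \<Longrightarrow> cg p N f g"
proof -
  assume "(of_nat p :: int fps) dvd f - g"
  then obtain c where c: "f - g = of_nat p * c" by (auto simp: dvd_def)
  have "fps_nth f i - fps_nth g i = int p * fps_nth c i" for i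
  proof -
    have "fps_nth f i - fps_nth g i = fps_nth (f - g) i" by simp
    also have "\<dots> = fps_nth (fps_const (int p) * c) i" by (simp add: c fps_of_nat)
    also have "\<dots> = int p * fps_nth c i" by simp
    finally show ?thesis .
  qed
  then show "cg p N f g" by (simp add: cg_def)
qed

lemma geom_big: "N < h \<Longrightarrow> cg p N (geom h) 1"
  unfolding cg_def geom_def
  by (auto simp: dvd_imp_le) (metis dvd_imp_le le_less_trans less_le_not_le neq0_conv)

lemma geom_inv: "0 < h \<Longrightarrow> (1 - fps_X ^ h) * geom h = 1"
proof (rule fps_ext)
  fix i assume h: "0 < h"
  have "fps_nth ((1 - fps_X ^ h) * geom h) i = fps_nth (geom h) i - fps_nth (fps_X ^ h * geom h) i"
    by (simp add: algebra_simps)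
  also have "\<dots> = fps_nth 1 i"
  proof (cases "i < h")
    case True
    then show ?thesis using h by (auto simp: fps_X_power_mult_nth geom_def dest: dvd_imp_le)
  next
    case False
    then have "h dvd i \<longleftrightarrow> h dvd (i - h)" by (simp add: dvd_minus_self)
    then show ?thesis using False h by (simp add: fps_X_power_mult_nth geom_def)
  qed
  finally show "fps_nth ((1 - fps_X ^ h) * geom h) i = fps_nth 1 i" .
qed


lemma frob:
  assumes p: "prime p"
  shows "(of_nat p :: int fps) dvd (1 - fps_X ^ h) ^ p - (1 - fps_X ^ (h * p))"
proof -
  let ?a = "- (fps_X ^ h) :: int fps"
  have p0: "0 < p" using p prime_gt_0_nat by blast
  have "(1 - fps_X ^ h :: int fps) ^ p = (?a + 1) ^ p" by simp
  also have "\<dots> = (\<Sum>k\<le>p. of_nat (p choose k) * ?a ^ k * 1 ^ (p - k))" by (rule binomial_ring)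
  also have "\<dots> = (\<Sum>k\<le>p. of_nat (p choose k) * ?a ^ k)" by simp
  also have "{..p} = insert 0 (insert p {1..<p})" using p0 by auto
  also have "(\<Sum>k\<in>insert 0 (insert p {1..<p}). of_nat (p choose k) * ?a ^ k) =
      1 + ?a ^ p + (\<Sum>k\<in>{1..<p}. of_nat (p choose k) * ?a ^ k)"
    using p0 by (simp add: add.assoc)
  finally have e: "(1 - fps_X ^ h :: int fps) ^ p = 1 + ?a ^ p + (\<Sum>k\<in>{1..<p}. of_nat (p choose k) * ?a ^ k)" .
  have mid: "(of_nat p :: int fps) dvd (\<Sum>k\<in>{1..<p}. of_nat (p choose k) * ?a ^ k)"
  proof (rule dvd_sum)
    fix k assume "k \<in> {1..<p}"
    then have "p dvd (p choose k)" using dvd_choose_prime[of k p] p by auto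
    then obtain q where "p choose k = p * q" by (auto simp: dvd_def)
    then have "(of_nat p :: int fps) dvd of_nat (p choose k)" by simp
    then show "(of_nat p :: int fps) dvd of_nat (p choose k) * ?a ^ k" by simp
  qed
  have ap: "(of_nat p :: int fps) dvd ?a ^ p + fps_X ^ (h * p)"
  proof (cases "p = 2")
    case True
    have "?a ^ p = fps_X ^ (h * p)" using True by (simp add: power_mult)
    then have "?a ^ p + fps_X ^ (h * p) = of_nat p * fps_X ^ (h * p)"
      using True by simp
    then show ?thesis by simp
  next
    case False
    have "2 \<le> p" using prime_ge_2_nat[OF p] .
    then have "2 < p" using False by simp
    then have "odd p" using prime_odd_nat[OF p] by simp
    then have "?a ^ p = - ((fps_X ^ h) ^ p)" by (simp add: power_minus_odd)
    then have "?a ^ p = - (fps_X ^ (h * p))" by (simp add: power_mult)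
    then show ?thesis by simp
  qed
  have "(1 - fps_X ^ h) ^ p - (1 - fps_X ^ (h * p)) =
      (?a ^ p + fps_X ^ (h * p)) + (\<Sum>k\<in>{1..<p}. of_nat (p choose k) * ?a ^ k)"
  proof -
    have gen: "\<And>A B C Dg :: int fps. A = 1 + B + C \<Longrightarrow> A - (1 - Dg) = (B + Dg) + C"
      by (simp add: algebra_simps)
    show ?thesis by (rule gen[OF e])
  qed
  then show ?thesis using dvd_add[OF ap mid] by (simp only:)
qed

lemma geom_pow:
  assumes p: "prime p" and h: "0 < h"
  shows "(of_nat p :: int fps) dvd geom h ^ p - geom (p * h)"
proof -
  obtain c :: "int fps" where c: "(1 - fps_X ^ h) ^ p - (1 - fps_X ^ (h * p)) = of_nat p * c"
    using frob[OF p, of h] unfolding dvd_def by blast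
  have ph: "0 < p * h" using p h prime_gt_0_nat by simp
  have inv1: "geom h ^ p * (1 - fps_X ^ h) ^ p = 1"
    using geom_inv[OF h] by (metis mult.commute power_mult_distrib power_one)
  have inv2: "(1 - fps_X ^ (h * p)) * geom (p * h) = 1"
    using geom_inv[OF ph] by (simp add: mult.commute)
  have c': "1 - fps_X ^ (h * p) = (1 - fps_X ^ h) ^ p - of_nat p * c"
    unfolding c[symmetric] by simp
  have "geom h ^ p = geom h ^ p * ((1 - fps_X ^ (h * p)) * geom (p * h))" by (simp add: inv2)
  also have "\<dots> = geom h ^ p * (((1 - fps_X ^ h) ^ p - of_nat p * c) * geom (p * h))"
    by (simp only: c')
  also have "\<dots> = (geom h ^ p * (1 - fps_X ^ h) ^ p) * geom (p * h) - of_nat p * (geom h ^ p * c * geom (p * h))"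
    by (simp add: algebra_simps)
  also have "\<dots> = geom (p * h) - of_nat p * (geom h ^ p * c * geom (p * h))"
    by (simp only: inv1 mult_1)
  finally have e: "geom h ^ p = geom (p * h) - of_nat p * (geom h ^ p * c * geom (p * h))" .
  have gen: "\<And>A B C :: int fps. A = B - C \<Longrightarrow> A - B = - C" by (simp add: algebra_simps)
  have "geom h ^ p - geom (p * h) = of_nat p * (- (geom h ^ p * c * geom (p * h)))"
    using gen[OF e] by simp
  then show ?thesis by (metis dvd_triv_left)
qed


definition Pf :: "nat \<Rightarrow> int fps" where "Pf i = (\<Prod>h\<in>{1..i}. 1 - fps_X ^ h)"
definition Gf :: "nat \<Rightarrow> int fps" where "Gf n = (\<Prod>h\<in>{1..n}. geom h)"
definition Rf :: "nat \<Rightarrow> int fps" where "Rf p = (\<Prod>i<p. Pf i)"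
definition Sf :: "nat \<Rightarrow> nat \<Rightarrow> int fps" where "Sf p n = (\<Prod>h\<in>{1..n}. geom (p * h))"

lemma T_reindex:
  "(\<Prod>q\<in>{..<k} \<times> {..<n}. geom (n - snd q + (k - 1 - fst q))) = (\<Prod>i<k. \<Prod>j<n. geom (i + j + 1))"
proof -
  have "(\<Prod>q\<in>{..<k} \<times> {..<n}. geom (n - snd q + (k - 1 - fst q))) = (\<Prod>i<k. \<Prod>j<n. geom (n - j + (k - 1 - i)))"
    by (simp only: prod.cartesian_product split_def)
  also have "\<dots> = (\<Prod>i<k. \<Prod>j<n. geom (n - j + (k - 1 - (k - Suc i))))"
    by (subst prod.nat_diff_reindex[symmetric]) simp
  also have "\<dots> = (\<Prod>i<k. \<Prod>j<n. geom (n - j + i))"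
    by (rule prod.cong[OF refl], rule prod.cong[OF refl]) auto
  also have "\<dots> = (\<Prod>i<k. \<Prod>j<n. geom (n - (n - Suc j) + i))"
    by (rule prod.cong[OF refl]) (subst prod.nat_diff_reindex[symmetric], simp)
  also have "\<dots> = (\<Prod>i<k. \<Prod>j<n. geom (i + j + 1))"
    by (rule prod.cong[OF refl], rule prod.cong[OF refl]) (auto simp: add.commute)
  finally show ?thesis .
qed

lemma row_cong: "cg p n (\<Prod>j<n. geom (i + j + 1)) (Pf i * Gf n)"
proof -
  have r1: "(\<Prod>j<n. geom (i + j + 1)) = (\<Prod>h\<in>{Suc i..i + n}. geom h)"
  proof -
    have "{Suc i..i + n} = (\<lambda>j. i + j + 1) ` {..<n}"
    proof (rule set_eqI)
      fix x show "x \<in> {Suc i..i + n} \<longleftrightarrow> x \<in> (\<lambda>j. i + j + 1) ` {..<n}"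
      proof
        assume "x \<in> {Suc i..i + n}"
        then show "x \<in> (\<lambda>j. i + j + 1) ` {..<n}" by (intro image_eqI[of _ _ "x - Suc i"]) auto
      next
        assume "x \<in> (\<lambda>j. i + j + 1) ` {..<n}"
        then show "x \<in> {Suc i..i + n}" by auto
      qed
    qed
    then show ?thesis by (simp add: prod.reindex inj_on_def)
  qed
  have split1: "(\<Prod>h\<in>{1..i + n}. geom h) = (\<Prod>h\<in>{1..i}. geom h) * (\<Prod>h\<in>{Suc i..i + n}. geom h)"
  proof -
    have "{1..i + n} = {1..i} \<union> {Suc i..i + n}" by auto
    then show ?thesis by (simp add: prod.union_disjoint[symmetric] ivl_disj_int)
  qed
  have one: "Pf i * (\<Prod>h\<in>{1..i}. geom h) = 1"
    unfolding Pf_def prod.distrib[symmetric] by (rule prod.neutral) (auto simp: geom_inv)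
  have split2: "(\<Prod>h\<in>{1..i + n}. geom h) = Gf n * (\<Prod>h\<in>{Suc n..n + i}. geom h)"
  proof -
    have "{1..i + n} = {1..n} \<union> {Suc n..n + i}" by auto
    then show ?thesis unfolding Gf_def by (simp add: prod.union_disjoint[symmetric] ivl_disj_int)
  qed
  have big: "cg p n (\<Prod>h\<in>{Suc n..n + i}. geom h) (\<Prod>h\<in>{Suc n..n + i}. 1)"
    by (rule cg_prod) (auto intro: geom_big)
  have "Pf i * (\<Prod>h\<in>{1..i + n}. geom h) = (Pf i * (\<Prod>h\<in>{1..i}. geom h)) * (\<Prod>h\<in>{Suc i..i + n}. geom h)"
    by (simp only: split1 mult.assoc)
  then have "(\<Prod>j<n. geom (i + j + 1)) = Pf i * (\<Prod>h\<in>{1..i + n}. geom h)"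
    by (simp only: r1 one mult_1)
  also have "\<dots> = (Pf i * Gf n) * (\<Prod>h\<in>{Suc n..n + i}. geom h)"
    by (simp only: split2 mult.assoc)
  finally have e: "(\<Prod>j<n. geom (i + j + 1)) = (Pf i * Gf n) * (\<Prod>h\<in>{Suc n..n + i}. geom h)" .
  have "cg p n ((Pf i * Gf n) * (\<Prod>h\<in>{Suc n..n + i}. geom h)) ((Pf i * Gf n) * 1)"
    by (rule cg_mult[OF cg_refl]) (use big in simp)
  then show ?thesis using e by simp
qed

lemma Gpow: "prime p \<Longrightarrow> cg p N (Gf n ^ p) (Sf p n)"
  unfolding Gf_def Sf_def prod_power_distrib
proof (rule cg_prod)
  fix h assume "prime p" "h \<in> {1..n}"
  then show "cg p N (geom h ^ p) (geom (p * h))" by (intro cg_dvd geom_pow) auto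
qed simp

lemma pl_cong1: "prime p \<Longrightarrow> cg p n (\<Prod>q\<in>{..<p} \<times> {..<n}. geom (n - snd q + (p - 1 - fst q))) (Rf p * Sf p n)"
proof -
  assume pr: "prime p"
  have "cg p n (\<Prod>i<p. \<Prod>j<n. geom (i + j + 1)) (\<Prod>i<p. Pf i * Gf n)"
    by (rule cg_prod) (simp, rule row_cong)
  moreover have "(\<Prod>i<p. Pf i * Gf n) = Rf p * Gf n ^ p"
    by (simp add: Rf_def prod.distrib)
  moreover have "cg p n (Rf p * Gf n ^ p) (Rf p * Sf p n)"
    by (rule cg_mult[OF cg_refl Gpow[OF pr]])
  ultimately show ?thesis unfolding T_reindex using cg_trans by metis
qed

lemma S_ext: "m \<le> N \<Longrightarrow> 0 < p \<Longrightarrow> cg p m (Sf p m) (Sf p N)"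
proof -
  assume mN: "m \<le> N" and p: "0 < p"
  have "Sf p N = Sf p m * (\<Prod>h\<in>{Suc m..N}. geom (p * h))"
  proof -
    have "{1..N} = {1..m} \<union> {Suc m..N}" using mN by auto
    then show ?thesis unfolding Sf_def by (simp add: prod.union_disjoint[symmetric] ivl_disj_int)
  qed
  moreover have X: "cg p m (\<Prod>h\<in>{Suc m..N}. geom (p * h)) (\<Prod>h\<in>{Suc m..N}. 1)"
  proof (rule cg_prod)
    fix h assume "h \<in> {Suc m..N}"
    then have "m < p * h" using p by (simp add: less_le_trans[of m h "p * h"])
    then show "cg p m (geom (p * h)) 1" by (rule geom_big)
  qed simp
  ultimately have "cg p m (Sf p N) (Sf p m * (\<Prod>h\<in>{Suc m..N}. 1))"
    using cg_mult[OF cg_refl X, of "Sf p m"] by simp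
  then show ?thesis using cg_sym by simp
qed

theorem pl_cong:
  assumes "prime p" "m \<le> N"
  shows "int p dvd int (pl p m) - fps_nth (Rf p * Sf p N) m"
proof -
  have p0: "0 < p" using assms(1) prime_gt_0_nat by blast
  have "cg p m (\<Prod>q\<in>{..<p} \<times> {..<m}. geom (m - snd q + (p - 1 - fst q))) (Rf p * Sf p N)"
    using pl_cong1[OF assms(1), of m] cg_mult[OF cg_refl S_ext[OF assms(2) p0], of "Rf p"] cg_trans by blast
  then show ?thesis using pl_geom[of p m] by (simp add: cg_def)
qed

lemma S_supp: "\<not> p dvd j \<Longrightarrow> fps_nth (Sf p N) j = 0"
proof -
  have "\<forall>j. \<not> p dvd j \<longrightarrow> fps_nth (\<Prod>h\<in>H. geom (p * h)) j = 0" if "finite H" for H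
    using that
  proof (induction H rule: finite_induct)
    case empty then show ?case by simp
  next
    case (insert a H)
    show ?case
    proof (intro allI impI)
      fix j assume j: "\<not> p dvd j"
      have "fps_nth (geom (p * a) * (\<Prod>h\<in>H. geom (p * h))) j =
          (\<Sum>i=0..j. fps_nth (geom (p * a)) i * fps_nth (\<Prod>h\<in>H. geom (p * h)) (j - i))"
        by (simp add: fps_mult_nth)
      also have "\<dots> = 0"
      proof (rule sum.neutral, clarify)
        fix i assume i: "i \<in> {0..j}"
        show "fps_nth (geom (p * a)) i * fps_nth (\<Prod>h\<in>H. geom (p * h)) (j - i) = 0"
        proof (cases "p dvd i")
          case True
          have "\<not> p dvd (j - i)"
          proof
            assume "p dvd (j - i)"
            then have "p dvd (j - i) + i" using True by (rule dvd_add)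
            then show False using j i by simp
          qed
          then show ?thesis using insert.IH by simp
        next
          case False
          then have "\<not> p * a dvd i" by (meson dvd_mult_left)
          then show ?thesis by (simp add: geom_def)
        qed
      qed
      finally show "fps_nth (\<Prod>h\<in>insert a H. geom (p * h)) j = 0" using insert.hyps by simp
    qed
  qed
  then show "\<not> p dvd j \<Longrightarrow> fps_nth (Sf p N) j = 0" unfolding Sf_def by blast
qed

lemma resid:
  assumes "\<And>i. i mod p = r \<Longrightarrow> int p dvd fps_nth Dl i"
    and "\<And>j. \<not> p dvd j \<Longrightarrow> fps_nth Sx j = 0" and "m mod p = r"
  shows "int p dvd fps_nth (Dl * Sx) m"
  unfolding fps_mult_nth
proof (rule dvd_sum)
  fix i assume i: "i \<in> {0..m}"
  show "int p dvd fps_nth Dl i * fps_nth Sx (m - i)"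
  proof (cases "p dvd (m - i)")
    case True
    have m: "m = (m - i) + i" using i by simp
    have z: "(m - i) mod p = 0" using True by simp
    have "m mod p = ((m - i) + i) mod p" using m by simp
    also have "\<dots> = ((m - i) mod p + i) mod p" by (rule mod_add_left_eq[symmetric])
    also have "\<dots> = i mod p" using z by simp
    finally have "i mod p = r" using assms(3) by simp
    then show ?thesis using assms(1) by simp
  next
    case False then show ?thesis using assms(2) by simp
  qed
qed


fun ladd :: "int list \<Rightarrow> int list \<Rightarrow> int list" where
  "ladd [] ys = ys" | "ladd xs [] = xs" | "ladd (x # xs) (y # ys) = (x + y) # ladd xs ys"

fun lmul :: "int list \<Rightarrow> int list \<Rightarrow> int list" where
  "lmul [] ys = []" | "lmul (x # xs) ys = ladd (map ((*) x) ys) (0 # lmul xs ys)"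

definition fl :: "int list \<Rightarrow> int fps" where
  "fl xs = Abs_fps (\<lambda>i. if i < length xs then xs ! i else 0)"

lemma fl_nth: "fps_nth (fl xs) i = (if i < length xs then xs ! i else 0)"
  by (simp add: fl_def)

lemma fl_Nil: "fl [] = 0" by (simp add: fps_ext fl_def)

lemma fl_Cons: "fl (x # xs) = fps_const x + fps_X * fl xs"
proof (rule fps_ext)
  fix i show "fps_nth (fl (x # xs)) i = fps_nth (fps_const x + fps_X * fl xs) i"
    by (cases i) (auto simp: fl_nth fps_X_mult_nth)
qed

lemma fl_ladd: "fl (ladd xs ys) = fl xs + fl ys"
  by (induction xs ys rule: ladd.induct) (auto simp: fl_Cons fl_Nil algebra_simps)

lemma fl_map: "fl (map ((*) x) ys) = fps_const x * fl ys"
  by (induction ys) (auto simp: fl_Cons fl_Nil algebra_simps)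

lemma fl_lmul: "fl (lmul xs ys) = fl xs * fl ys"
  by (induction xs) (auto simp: fl_Cons fl_Nil fl_ladd fl_map algebra_simps)

lemma fl_rep: "fl (replicate h 0 @ xs) = fps_X ^ h * fl xs"
  by (induction h) (auto simp: fl_Cons)

definition facl :: "nat \<Rightarrow> int list" where "facl h = ladd [1] (replicate h 0 @ [-1])"

lemma fl_one: "fl [c] = fps_const c" by (simp add: fl_Cons fl_Nil)

lemma fl_facl: "fl (facl h) = 1 - fps_X ^ h"
  by (simp add: facl_def fl_ladd fl_rep fl_one fps_const_neg[symmetric])

primrec PiL :: "nat \<Rightarrow> int list" where
  "PiL 0 = [1]" | "PiL (Suc i) = lmul (PiL i) (facl (Suc i))"

primrec RL :: "nat \<Rightarrow> int list" where
  "RL 0 = [1]" | "RL (Suc p) = lmul (RL p) (PiL p)"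

lemma fl_PiL: "fl (PiL i) = Pf i"
proof (induction i)
  case 0 then show ?case by (simp add: Pf_def fl_one)
next
  case (Suc i)
  have "{1..Suc i} = insert (Suc i) {1..i}" by auto
  then have "Pf (Suc i) = (1 - fps_X ^ Suc i) * Pf i" by (simp add: Pf_def)
  then show ?case using Suc by (simp add: fl_lmul fl_facl mult.commute)
qed

lemma fl_RL: "fl (RL p) = Rf p"
  by (induction p) (auto simp: Rf_def fl_one fl_lmul fl_PiL)


lemma RL2: "RL 2 = [1, -1]"
  by (simp add: eval_nat_numeral facl_def)
lemma RL3: "RL 3 = [1, -2, 0, 2, -1]"
  by (simp add: eval_nat_numeral facl_def)
lemma RL5: "RL 5 = [1, -4, 3, 6, -7, -2, -4, 10, 6, -10, 2, -10, 6, 10, -4, -2, -7, 6, 3, -4, 1]"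
  by (simp add: eval_nat_numeral facl_def)
lemma RL7: "RL 7 = [1, -6, 10, 6, -29, 10, 13, 22, -17, -46, 38, -34, 40, 50, -34, -34, -49, 46, -25, 50, 71, -2, -116, -62, 97, -68, 96, 36, 0, -36, -96, 68, -97, 62, 116, 2, -71, -50, 25, -46, 49, 34, 34, -50, -40, 34, -38, 46, 17, -22, -13, -10, 29, -6, -10, 6, -1]"
  by (simp add: eval_nat_numeral facl_def)

primrec chk :: "int \<Rightarrow> nat \<Rightarrow> nat \<Rightarrow> nat \<Rightarrow> int list \<Rightarrow> bool" where
  "chk p q r i [] = True"
| "chk p q r i (x # xs) = ((i mod q = r \<longrightarrow> x mod p = 0) \<and> chk p q r (Suc i) xs)"

lemma chk_nth: "chk p q r i Ls \<Longrightarrow> j < length Ls \<Longrightarrow> (i + j) mod q = r \<Longrightarrow> Ls ! j mod p = 0"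
proof (induction Ls arbitrary: i j)
  case Nil then show ?case by simp
next
  case (Cons x xs)
  show ?case
  proof (cases j)
    case 0 then show ?thesis using Cons.prems by simp
  next
    case (Suc j')
    then show ?thesis using Cons.prems Cons.IH[of "Suc i" j'] by simp
  qed
qed

lemma fl_mult_nth_short:
  assumes "length cs \<le> Suc m"
  shows "fps_nth (fl cs * F) m = (\<Sum>i<length cs. cs ! i * fps_nth F (m - i))"
proof -
  have "fps_nth (fl cs * F) m = (\<Sum>i=0..m. fps_nth (fl cs) i * fps_nth F (m - i))" by (simp add: fps_mult_nth)
  also have "\<dots> = (\<Sum>i\<in>{..<length cs}. fps_nth (fl cs) i * fps_nth F (m - i))"
    by (rule sum.mono_neutral_right) (use assms in \<open>auto simp: fl_nth\<close>)
  also have "\<dots> = (\<Sum>i<length cs. cs ! i * fps_nth F (m - i))" by (simp add: fl_nth)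
  finally show ?thesis .
qed

lemma fin_gen:
  assumes p: "prime p" and len: "length cs \<le> Suc m"
    and ch: "chk (int p) p (m mod p) 0 (lmul cs (RL p))"
  shows "int p dvd (\<Sum>i<length cs. cs ! i * int (pl p (m - i)))"
proof -
  define F where "F = Rf p * Sf p m"
  have d1: "int p dvd (\<Sum>i<length cs. cs ! i * int (pl p (m - i))) - (\<Sum>i<length cs. cs ! i * fps_nth F (m - i))"
    unfolding sum_subtractf[symmetric]
  proof (rule dvd_sum)
    fix i assume "i \<in> {..<length cs}"
    have "int p dvd int (pl p (m - i)) - fps_nth F (m - i)" unfolding F_def by (rule pl_cong[OF p]) simp
    then show "int p dvd cs ! i * int (pl p (m - i)) - cs ! i * fps_nth F (m - i)"
      by (metis dvd_mult right_diff_distrib)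
  qed
  have "(\<Sum>i<length cs. cs ! i * fps_nth F (m - i)) = fps_nth (fl cs * F) m"
    using fl_mult_nth_short[OF len] by simp
  also have "fl cs * F = fl (lmul cs (RL p)) * Sf p m"
    by (simp add: F_def fl_lmul fl_RL mult.assoc)
  finally have e: "(\<Sum>i<length cs. cs ! i * fps_nth F (m - i)) = fps_nth (fl (lmul cs (RL p)) * Sf p m) m" .
  have "int p dvd fps_nth (fl (lmul cs (RL p)) * Sf p m) m"
  proof (rule resid[of p "m mod p"])
    fix i assume i: "i mod p = m mod p"
    show "int p dvd fps_nth (fl (lmul cs (RL p))) i"
    proof (cases "i < length (lmul cs (RL p))")
      case True
      then have "lmul cs (RL p) ! i mod int p = 0" using chk_nth[OF ch True] i by simp
      then show ?thesis using True by (simp add: fl_nth dvd_eq_mod_eq_0)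
    next
      case False then show ?thesis by (simp add: fl_nth)
    qed
  next
    fix j assume "\<not> p dvd j" then show "fps_nth (Sf p m) j = 0" by (rule S_supp)
  qed simp
  then show ?thesis using d1 e by (metis dvd_diff_commute dvd_add diff_add_cancel)
qed

lemma nat_mod_int: "int p dvd int x - int y \<Longrightarrow> x mod p = y mod p"
proof -
  assume "int p dvd int x - int y"
  then have "int x mod int p = int y mod int p" by (simp add: mod_eq_dvd_iff)
  then have "int (x mod p) = int (y mod p)" by (simp add: of_nat_mod)
  then show ?thesis by simp
qed

theorem theorem2:
  fixes n :: nat
  shows "pl 2 (2*n+1) mod 2 = pl 2 (2*n) mod 2 \<and>
         pl 3 (3*n+2) mod 3 = 0 \<and>
         pl 3 (3*n+1) mod 3 = pl 3 (3*n) mod 3 \<and>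
         pl 5 (5*n+2) mod 5 = pl 5 (5*n+4) mod 5 \<and>
         pl 5 (5*n+1) mod 5 = pl 5 (5*n+3) mod 5 \<and>
         (pl 7 (7*n+2) + pl 7 (7*n+3)) mod 7 = (pl 7 (7*n+4) + pl 7 (7*n+5)) mod 7"
proof (intro conjI)
  have p2: "prime (2::nat)" by simp
  have p3: "prime (3::nat)" by code_simp
  have p5: "prime (5::nat)" by code_simp
  have p7: "prime (7::nat)" by code_simp
  show "pl 2 (2*n+1) mod 2 = pl 2 (2*n) mod 2"
  proof -
    have "int 2 dvd (\<Sum>i<length [1, -1::int]. [1, -1] ! i * int (pl 2 ((2*n+1) - i)))"
      by (rule fin_gen[OF p2]) (simp_all add: RL2)
    then show ?thesis by (intro nat_mod_int) (simp add: numeral_eq_Suc)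
  qed
  show "pl 3 (3*n+2) mod 3 = 0"
  proof -
    have md: "(3 * n + 2) mod 3 = 2" by presburger
    have "int 3 dvd (\<Sum>i<length [1::int]. [1] ! i * int (pl 3 ((3*n+2) - i)))"
      by (rule fin_gen[OF p3]) (simp_all only: md, simp_all add: RL3)
    then have "int 3 dvd int (pl 3 (3*n+2))" by simp
    then have "3 dvd pl 3 (3*n+2)" by (simp only: int_dvd_int_iff)
    then show ?thesis by simp
  qed
  show "pl 3 (3*n+1) mod 3 = pl 3 (3*n) mod 3"
  proof -
    have "int 3 dvd (\<Sum>i<length [1, -1::int]. [1, -1] ! i * int (pl 3 ((3*n+1) - i)))"
      by (rule fin_gen[OF p3]) (simp_all add: RL3)
    then show ?thesis by (intro nat_mod_int) (simp add: numeral_eq_Suc)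
  qed
  show "pl 5 (5*n+2) mod 5 = pl 5 (5*n+4) mod 5"
  proof -
    have "int 5 dvd (\<Sum>i<length [1, 0, -1::int]. [1, 0, -1] ! i * int (pl 5 ((5*n+4) - i)))"
      by (rule fin_gen[OF p5]) (simp_all add: RL5)
    then have "int 5 dvd int (pl 5 (5*n+4)) - int (pl 5 (5*n+2))" by (simp add: numeral_eq_Suc)
    then show ?thesis by (intro nat_mod_int[symmetric])
  qed
  show "pl 5 (5*n+1) mod 5 = pl 5 (5*n+3) mod 5"
  proof -
    have "int 5 dvd (\<Sum>i<length [1, 0, -1::int]. [1, 0, -1] ! i * int (pl 5 ((5*n+3) - i)))"
      by (rule fin_gen[OF p5]) (simp_all add: RL5)
    then have "int 5 dvd int (pl 5 (5*n+3)) - int (pl 5 (5*n+1))" by (simp add: numeral_eq_Suc)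
    then show ?thesis by (intro nat_mod_int[symmetric])
  qed
  show "(pl 7 (7*n+2) + pl 7 (7*n+3)) mod 7 = (pl 7 (7*n+4) + pl 7 (7*n+5)) mod 7"
  proof -
    have "int 7 dvd (\<Sum>i<length [1, 1, -1, -1::int]. [1, 1, -1, -1] ! i * int (pl 7 ((7*n+5) - i)))"
      by (rule fin_gen[OF p7]) (simp_all add: RL7)
    then have "int 7 dvd int (pl 7 (7*n+4) + pl 7 (7*n+5)) - int (pl 7 (7*n+2) + pl 7 (7*n+3))"
      by (simp add: numeral_eq_Suc algebra_simps)
    then show ?thesis by (intro nat_mod_int[symmetric])
  qed
qed


end
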